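(* Let $\alpha>-1$, $d\in\widetilde{D}$ (with the convention $d_{-1}=0$), $q=(L_n^{(\alpha)})_{n\in\mathbb{N}_0}$, $r_k=r_k^\alpha$, $\widetilde{q}_k=L_k^{(\alpha)}/r_k$, and let $T=E_{L^{(\alpha+1)},d}$ regarded as an operator in $H(\widetilde{q})$ with domain $\mathcal{P}_c$. For $g=\sum_kg_k\widetilde{q}_k\in H(\widetilde{q})$: (i) $g\in D(T^* )$ iff $\sum_{k=0}^\infty\left|\bar d_kg_k+\sum_{t=0}^{k-1}(\bar d_k-\bar d_{k-1})\frac{r_tg_t}{r_k}\right|^2<\infty$; (ii) for $g\in D(T^* )$, $T^*g=\sum_{k=0}^\infty\left(\bar d_kg_k+\sum_{t=0}^{k-1}(\bar d_k-\bar d_{k-1})g_t\frac{r_t}{r_k}\right)\widetilde{q}_k$; (iii) for $s\in\mathbb{N}_0$, $\widetilde{q}_s\in D(T^* )$ iff $((\bar d_k-\bar d_{k-1})/r_k)_{k\in\mathbb{N}_0}\in\ell_2$; (iv) if $((\bar d_k-\bar d_{k-1})/r_k)_{k\in\mathbb{N}_0}\in\ell_2$, then (a) $T$ is closable, (b) $g\in D(\overline{T})$ iff $\sum_{s=0}^\infty\left|g_sd_s+\sum_{k=s+1}^\infty(d_k-d_{k-1})\frac{r_s}{r_k}g_k\right|^2<\infty$, and (c) for $g\in D(\overline{T})$, $\overline{T}g=\sum_{s=0}^\infty\left(g_sd_s+\sum_{k=s+1}^\infty(d_k-d_{k-1})\frac{r_s}{r_k}g_k\right)\widetilde{q}_s$;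 (v) for $\alpha>1$, for the differential operator $m^{\alpha+1}$ regarded in $H(\widetilde{q})$ with domain $\mathcal{P}_c$: (a) $g\in D(\overline{m^{\alpha+1}})$ iff $\sum_{s=0}^\infty\left|g_s(-2s+1)+\sum_{k=s+1}^\infty(-2)\frac{r_s}{r_k}g_k\right|^2<\infty$, and (b) for such $g$, $\overline{m^{\alpha+1}}(g)=\sum_{s=0}^\infty\left(g_s(-2s+1)+\sum_{k=s+1}^\infty(-2)\frac{r_s}{r_k}g_k\right)\widetilde{q}_s$.
   Context: $\mathcal{P}_c$ is the space of polynomials in one real variable with complex coefficients. For $\beta>-1$, $L_n^{(\beta)}(x)=\sum_{k=0}^n\frac{(-1)^k}{k!}\binom{n+\beta}{n-k}x^k$ is the generalized Laguerre polynomial and $r_k^\beta=\sqrt{\Gamma(k+\beta+1)/(k!\,\Gamma(\beta+1))}$ its norm in $L^2((0,\infty),x^\beta e^{-x}dx/\Gamma(\beta+1))$. For a sequence $Q=(Q_n)$ of polynomials with $\deg Q_n=n$, $H(Q)$ is the completion of $\mathcal{P}_c$ with respect to the inner product making $(Q_n)$ orthonormal; $g\in H(Q)$ is written $g=\sum_kg_kQ_k$, $(g_k)\in\ell_2$. $\widetilde{D}$ is the set of non-constant sequences of non-zero complex numbers. For a polynomial sequence $p$ and $d\in\widetilde{D}$, $E_{p,d}$ is the linear map on $\mathcal{P}_c$ with $E_{p,d}(p_n)=d_np_n$; $L^{(\alpha+1)}=(L_n^{(\alpha+1)})_n$. $T^*$ denotes the adjoint and $\overline{T}$ the closure. $m^{\alpha+1}$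 is defined by $(m^{\alpha+1}f)(x)=2xf''(x)+2(\alpha+2-x)f'(x)+f(x)$. *)

theory Defs
  imports "HOL-Analysis.Analysis" "HOL-Computational_Algebra.Polynomial"
begin

definition laguerre :: "real \<Rightarrow> nat \<Rightarrow> complex poly" where
  "laguerre \<beta> n = (\<Sum>k\<le>n. monom (complex_of_real
      ((-1)^k / fact k * ((real n + \<beta>) gchoose (n - k)))) k)"

definition rnorm :: "real \<Rightarrow> nat \<Rightarrow> real" where
  "rnorm \<beta> k = sqrt (Gamma (real k + \<beta> + 1) / (fact k * Gamma (\<beta> + 1)))"

definition qt :: "real \<Rightarrow> nat \<Rightarrow> complex poly" where
  "qt \<alpha> k = smult (complex_of_real (1 / rnorm \<alpha> k)) (laguerre \<alpha> k)"

section \<open>Coordinates with respect to a polynomial basis (deg Q n = n)\<close>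

definition coords :: "(nat \<Rightarrow> complex poly) \<Rightarrow> complex poly \<Rightarrow> nat \<Rightarrow> complex" where
  "coords Q p = (THE c. (\<forall>k>degree p. c k = 0) \<and>
                        p = (\<Sum>k\<le>degree p. smult (c k) (Q k)))"

definition Emap :: "(nat \<Rightarrow> complex poly) \<Rightarrow> (nat \<Rightarrow> complex) \<Rightarrow> complex poly \<Rightarrow> complex poly" where
  "Emap P d f = (\<Sum>k\<le>degree f. smult (d k * coords P f k) (P k))"

definition Dtilde :: "(nat \<Rightarrow> complex) set" where
  "Dtilde = {d. (\<forall>n. d n \<noteq> 0) \<and> \<not> (\<forall>n m. d n = d m)}"

section \<open>The Hilbert space H(qt) modelled by coefficient sequences in l2\<close>

definition l2 :: "(nat \<Rightarrow> complex) \<Rightarrow> bool" where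
  "l2 g \<longleftrightarrow> summable (\<lambda>k. (cmod (g k))^2)"

definition l2inner :: "(nat \<Rightarrow> complex) \<Rightarrow> (nat \<Rightarrow> complex) \<Rightarrow> complex" where
  "l2inner f g = (\<Sum>k. f k * cnj (g k))"

definition l2norm :: "(nat \<Rightarrow> complex) \<Rightarrow> real" where
  "l2norm f = sqrt (\<Sum>k. (cmod (f k))^2)"

definition emb :: "real \<Rightarrow> complex poly \<Rightarrow> nat \<Rightarrow> complex" where
  "emb \<alpha> f = coords (qt \<alpha>) f"

text \<open>Graph of an operator in H(qt) with domain P_c, given by a map on polynomials.\<close>
definition op_graph :: "real \<Rightarrow> (complex poly \<Rightarrow> complex poly) \<Rightarrow> ((nat \<Rightarrow> complex) \<times> (nat \<Rightarrow> complex)) set" where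
  "op_graph \<alpha> A = {(emb \<alpha> f, emb \<alpha> (A f)) | f. True}"

definition adj_dom :: "((nat \<Rightarrow> complex) \<times> (nat \<Rightarrow> complex)) set \<Rightarrow> (nat \<Rightarrow> complex) set" where
  "adj_dom G = {g. l2 g \<and> (\<exists>h. l2 h \<and> (\<forall>(f, y)\<in>G. l2inner y g = l2inner f h))}"

definition adj :: "((nat \<Rightarrow> complex) \<times> (nat \<Rightarrow> complex)) set \<Rightarrow> (nat \<Rightarrow> complex) \<Rightarrow> nat \<Rightarrow> complex" where
  "adj G g = (THE h. l2 h \<and> (\<forall>(f, y)\<in>G. l2inner y g = l2inner f h))"

definition graph_closure :: "((nat \<Rightarrow> complex) \<times> (nat \<Rightarrow> complex)) set \<Rightarrow> ((nat \<Rightarrow> complex) \<times> (nat \<Rightarrow> complex)) set" where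
  "graph_closure G = {(g, h). l2 g \<and> l2 h \<and>
     (\<exists>F. (\<forall>n. F n \<in> G) \<and> (\<lambda>n. l2norm (fst (F n) - g)) \<longlonglongrightarrow> 0
                          \<and> (\<lambda>n. l2norm (snd (F n) - h)) \<longlonglongrightarrow> 0)}"

definition closable :: "((nat \<Rightarrow> complex) \<times> (nat \<Rightarrow> complex)) set \<Rightarrow> bool" where
  "closable G \<longleftrightarrow> (\<forall>g h h'. (g, h) \<in> graph_closure G \<and> (g, h') \<in> graph_closure G \<longrightarrow> h = h')"

definition cl_dom :: "((nat \<Rightarrow> complex) \<times> (nat \<Rightarrow> complex)) set \<Rightarrow> (nat \<Rightarrow> complex) set" where
  "cl_dom G = {g. \<exists>h. (g, h) \<in> graph_closure G}"

definition cl_op :: "((nat \<Rightarrow> complex) \<times> (nat \<Rightarrow> complex)) set \<Rightarrow> (nat \<Rightarrow> complex) \<Rightarrow> nat \<Rightarrow> complex" where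
  "cl_op G g = (THE h. (g, h) \<in> graph_closure G)"

definition mop :: "real \<Rightarrow> complex poly \<Rightarrow> complex poly" where
  "mop \<alpha> f = smult 2 ([:0, 1:] * pderiv (pderiv f))
             + smult 2 ([:complex_of_real (\<alpha> + 2), -1:] * pderiv f) + f"

end

theory Submission
  imports Defs
begin


locale qbasis =
  fixes Q :: "nat \<Rightarrow> complex poly"
  assumes degQ: "\<And>k. degree (Q k) = k" and lcQ: "\<And>k. coeff (Q k) k \<noteq> 0"
begin

lemma degree_sumQ: "degree (\<Sum>k\<le>N. smult (c k) (Q k)) \<le> N"
  by (rule degree_sum_le) (auto intro: order.trans[OF degree_smult_le] simp: degQ)

lemma sumQ_zero: "(\<Sum>k\<le>N. smult (c k) (Q k)) = 0 \<Longrightarrow> k \<le> N \<Longrightarrow> c k = 0"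
proof (induction N arbitrary: k)
  case 0
  then show ?case using lcQ[of 0] by (auto dest: arg_cong[where f="\<lambda>p. coeff p 0"])
next
  case (Suc N)
  have "coeff (\<Sum>k\<le>N. smult (c k) (Q k)) (Suc N) = 0"
    using degree_sumQ[where N=N and c=c] by (simp add: coeff_eq_0)
  moreover have "coeff (\<Sum>k\<le>Suc N. smult (c k) (Q k)) (Suc N) = 0" using Suc.prems by simp
  ultimately have cS: "c (Suc N) = 0" using lcQ[of "Suc N"] by (simp add: sum.atMost_Suc)
  with Suc.prems have "(\<Sum>k\<le>N. smult (c k) (Q k)) = 0" by (simp add: sum.atMost_Suc)
  with Suc.IH cS Suc.prems show ?case by (cases "k = Suc N") auto
qed

lemma sumQ_exists: "degree p \<le> N \<Longrightarrow> \<exists>c. (\<forall>k>N. c k = 0) \<and> p = (\<Sum>k\<le>N. smult (c k) (Q k))"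
proof (induction N arbitrary: p)
  case 0
  then obtain a where p: "p = [:a:]" by (metis degree_eq_zeroE le_zero_eq)
  obtain b where q: "Q 0 = [:b:]" and b: "b \<noteq> 0" using degQ[of 0] lcQ[of 0] by (metis degree_eq_zeroE coeff_pCons_0)
  show ?case
    by (rule exI[of _ "\<lambda>k. if k = 0 then a / b else 0"]) (use p q b in auto)
next
  case (Suc N)
  define l where "l = coeff p (Suc N) / coeff (Q (Suc N)) (Suc N)"
  define p' where "p' = p - smult l (Q (Suc N))"
  have "degree p' \<le> N"
  proof (rule degree_le, intro allI impI)
    fix i assume i: "N < i"
    show "coeff p' i = 0"
    proof (cases "i = Suc N")
      case True then show ?thesis using lcQ[of "Suc N"] by (simp add: p'_def l_def)
    next
      case False
      with i have "i > Suc N" by simp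
      then have "coeff p i = 0" "coeff (Q (Suc N)) i = 0" using Suc.prems degQ[of "Suc N"]
        by (auto intro: coeff_eq_0)
      then show ?thesis by (simp add: p'_def)
    qed
  qed
  from Suc.IH[OF this] obtain c where c: "\<forall>k>N. c k = 0" "p' = (\<Sum>k\<le>N. smult (c k) (Q k))" by blast
  define c' where "c' = c(Suc N := l)"
  have "(\<Sum>k\<le>N. smult (c' k) (Q k)) = (\<Sum>k\<le>N. smult (c k) (Q k))"
    by (rule sum.cong) (auto simp: c'_def)
  then have "p = (\<Sum>k\<le>Suc N. smult (c' k) (Q k))"
    using c by (simp add: sum.atMost_Suc c'_def p'_def) (metis diff_add_cancel)
  moreover have "\<forall>k>Suc N. c' k = 0" using c by (auto simp: c'_def)
  ultimately show ?case by blast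
qed

lemma sum_extend:
  assumes "\<forall>k>N. c k = 0" "N \<le> M"
  shows "(\<Sum>k\<le>N. smult (c k) (Q k)) = (\<Sum>k\<le>M. smult (c k) (Q k))"
  by (rule sum.mono_neutral_left) (use assms in auto)

lemma sumQ_uniq:
  assumes "\<forall>k>N1. c1 k = 0" "\<forall>k>N2. c2 k = 0"
    "(\<Sum>k\<le>N1. smult (c1 k) (Q k)) = (\<Sum>k\<le>N2. smult (c2 k) (Q k))"
  shows "c1 = c2"
proof
  fix k
  define M where "M = max N1 N2"
  have "(\<Sum>k\<le>M. smult (c1 k) (Q k)) = (\<Sum>k\<le>M. smult (c2 k) (Q k))"
    using assms sum_extend[of N1 c1 M] sum_extend[of N2 c2 M] by (simp add: M_def)
  then have "(\<Sum>k\<le>M. smult (c1 k - c2 k) (Q k)) = 0"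
    by (simp add: smult_diff_left sum_subtractf)
  then have "k \<le> M \<Longrightarrow> c1 k - c2 k = 0" using sumQ_zero[where c="\<lambda>k. c1 k - c2 k" and N=M] by blast
  then show "c1 k = c2 k" using assms by (cases "k \<le> M") (auto simp: M_def)
qed

lemma coords_eq:
  assumes "\<forall>k>N. c k = 0" "p = (\<Sum>k\<le>N. smult (c k) (Q k))"
  shows "coords Q p = c"
proof -
  obtain c' where c': "\<forall>k>degree p. c' k = 0" "p = (\<Sum>k\<le>degree p. smult (c' k) (Q k))"
    using sumQ_exists[of p "degree p"] by auto
  have cc: "c' = c" using sumQ_uniq[OF c'(1) assms(1)] c'(2) assms(2) by simp
  show ?thesis unfolding coords_def
  proof (rule the_equality)
    show "(\<forall>k>degree p. c k = 0) \<and> p = (\<Sum>k\<le>degree p. smult (c k) (Q k))" using c' cc by simp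
  next
    fix e assume "(\<forall>k>degree p. e k = 0) \<and> p = (\<Sum>k\<le>degree p. smult (e k) (Q k))"
    then show "e = c" using sumQ_uniq[of "degree p" e "degree p" c'] c' cc by auto
  qed
qed

lemma coords_spec: "(\<forall>k>degree p. coords Q p k = 0) \<and> p = (\<Sum>k\<le>degree p. smult (coords Q p k) (Q k))"
proof -
  obtain c' where c': "\<forall>k>degree p. c' k = 0" "p = (\<Sum>k\<le>degree p. smult (c' k) (Q k))"
    using sumQ_exists[of p "degree p"] by auto
  then show ?thesis using coords_eq[OF c'] by simp
qed

lemma coords_repr: "degree p \<le> N \<Longrightarrow> p = (\<Sum>k\<le>N. smult (coords Q p k) (Q k))"
  using coords_spec[of p] sum_extend[of "degree p" "coords Q p" N] by auto

lemma coords_finite: "k > degree p \<Longrightarrow> coords Q p k = 0"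
  using coords_spec by auto

lemma Emap_repr:
  assumes "\<forall>k>N. c k = 0"
  shows "Emap Q d (\<Sum>k\<le>N. smult (c k) (Q k)) = (\<Sum>k\<le>N. smult (d k * c k) (Q k))"
proof -
  let ?p = "\<Sum>k\<le>N. smult (c k) (Q k)"
  have co: "coords Q ?p = c" by (rule coords_eq[OF assms refl])
  have "degree ?p \<le> N" by (rule degree_sumQ)
  have "Emap Q d ?p = (\<Sum>k\<le>degree ?p. smult (d k * c k) (Q k))" by (simp add: Emap_def co)
  also have "\<dots> = (\<Sum>k\<le>N. smult (d k * c k) (Q k))"
    by (rule sum_extend) (use coords_spec[of ?p] co \<open>degree ?p \<le> N\<close> in auto)
  finally show ?thesis .
qed

end


lemma coeff_laguerre: "coeff (laguerre \<beta> n) k =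
   (if k \<le> n then complex_of_real ((-1)^k / fact k * ((real n + \<beta>) gchoose (n - k))) else 0)"
  unfolding laguerre_def coeff_sum by (simp add: coeff_monom)

lemma coeff_laguerre_top: "coeff (laguerre \<beta> n) n \<noteq> 0"
  by (simp add: coeff_laguerre)

lemma degree_laguerre: "degree (laguerre \<beta> n) = n"
proof (rule order.antisym)
  show "degree (laguerre \<beta> n) \<le> n" by (rule degree_le) (simp add: coeff_laguerre)
  show "n \<le> degree (laguerre \<beta> n)" by (rule le_degree) (rule coeff_laguerre_top)
qed

lemma laguerre_step: "laguerre (\<beta> + 1) (Suc n) = laguerre (\<beta> + 1) n + laguerre \<beta> (Suc n)"
proof (rule poly_eqI)
  fix k
  show "coeff (laguerre (\<beta> + 1) (Suc n)) k = coeff (laguerre (\<beta> + 1) n + laguerre \<beta> (Suc n)) k"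
  proof (cases "k \<le> n")
    case True
    then have e: "Suc n - k = Suc (n - k)" by simp
    have a1: "real (Suc n) + (\<beta> + 1) = (real n + \<beta> + 1) + 1" by simp
    have a2: "real (Suc n) + \<beta> = real n + \<beta> + 1" by simp
    have a3: "real n + (\<beta> + 1) = real n + \<beta> + 1" by simp
    have key: "(real n + \<beta> + 1 + 1) gchoose Suc (n-k) = ((real n + \<beta> + 1) gchoose (n-k)) + ((real n + \<beta> + 1) gchoose Suc (n-k))"
      by (rule gbinomial_Suc_Suc)
    have "coeff (laguerre (\<beta> + 1) (Suc n)) k = complex_of_real ((-1)^k / fact k * ((real n + \<beta> + 1 + 1) gchoose Suc (n-k)))"
      using True by (subst coeff_laguerre, simp only: a1 e) simp
    also have "\<dots> = complex_of_real ((-1)^k / fact k * ((real n + \<beta> + 1) gchoose (n-k))) + complex_of_real ((-1)^k / fact k * ((real n + \<beta> + 1) gchoose Suc (n-k)))"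
      by (simp only: key distrib_left of_real_add)
    also have "\<dots> = coeff (laguerre (\<beta> + 1) n + laguerre \<beta> (Suc n)) k"
      using True by (simp only: coeff_add coeff_laguerre a2 a3 e) simp
    finally show ?thesis .
  next
    case False
    then show ?thesis by (cases "k = Suc n") (auto simp: coeff_laguerre)
  qed
qed

lemma laguerre_sum: "laguerre (\<beta> + 1) n = (\<Sum>j\<le>n. laguerre \<beta> j)"
proof (induction n)
  case 0
  show ?case by (simp add: laguerre_def)
next
  case (Suc n)
  then show ?case by (simp add: laguerre_step sum.atMost_Suc)
qed

lemma laguerre_diff: "laguerre \<beta> k = laguerre (\<beta> + 1) k - (if k = 0 then 0 else laguerre (\<beta> + 1) (k - 1))"
  by (cases k) (auto simp: laguerre_step laguerre_sum)


lemma suminf_shift_fin: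
  fixes h :: "nat \<Rightarrow> 'a::{comm_monoid_add,t2_space,topological_comm_monoid_add}"
  assumes "\<forall>k>N. h k = 0"
  shows "(\<Sum>i. h (i + j + 1)) = (\<Sum>k\<in>{j<..N}. h k)"
proof -
  have "(\<Sum>i. h (i + j + 1)) = (\<Sum>i<N - j. h (i + j + 1))"
    by (rule suminf_finite) (use assms in auto)
  also have "\<dots> = (\<Sum>k\<in>{j<..N}. h k)"
    by (rule sum.reindex_bij_witness[where i="\<lambda>k. k - j - 1" and j="\<lambda>i. i + j + 1"]) auto
  finally show ?thesis .
qed

lemma telescope_poly:
  fixes P :: "nat \<Rightarrow> complex poly"
  shows "(\<Sum>k\<le>N. smult (y k) (P k - (if k = 0 then 0 else P (k - 1)))) =
         (\<Sum>k\<le>N. smult (y k - y (Suc k)) (P k)) + smult (y (Suc N)) (P N)"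
proof (induction N)
  case 0 then show ?case by (simp add: smult_diff_left)
next
  case (Suc N)
  then show ?case by (simp add: sum.atMost_Suc smult_diff_left smult_diff_right algebra_simps)
qed

lemma swap_tri:
  fixes F :: "nat \<Rightarrow> nat \<Rightarrow> 'a::comm_monoid_add"
  shows "(\<Sum>k\<le>N. \<Sum>j\<le>k. F j k) = (\<Sum>j\<le>N. \<Sum>k\<in>{j..N}. F j k)"
proof (induction N)
  case 0 then show ?case by simp
next
  case (Suc N)
  have "(\<Sum>j\<le>Suc N. \<Sum>k\<in>{j..Suc N}. F j k) = (\<Sum>j\<le>N. \<Sum>k\<in>{j..Suc N}. F j k) + F (Suc N) (Suc N)"
    by (simp add: sum.atMost_Suc)
  also have "(\<Sum>j\<le>N. \<Sum>k\<in>{j..Suc N}. F j k) = (\<Sum>j\<le>N. (\<Sum>k\<in>{j..N}. F j k) + F j (Suc N))"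
    by (rule sum.cong) (auto simp: atLeastAtMostSuc_conv add.commute)
  finally show ?case using Suc by (simp add: sum.atMost_Suc sum.distrib add_ac)
qed

lemma swap_strict:
  fixes F :: "nat \<Rightarrow> nat \<Rightarrow> 'a::comm_monoid_add"
  shows "(\<Sum>s\<le>N. \<Sum>k\<in>{s<..N}. F s k) = (\<Sum>k\<le>N. \<Sum>s<k. F s k)"
proof (induction N)
  case 0 then show ?case by simp
next
  case (Suc N)
  have "(\<Sum>s\<le>Suc N. \<Sum>k\<in>{s<..Suc N}. F s k) = (\<Sum>s\<le>N. \<Sum>k\<in>{s<..Suc N}. F s k)"
    by (simp add: sum.atMost_Suc)
  also have "\<dots> = (\<Sum>s\<le>N. (\<Sum>k\<in>{s<..N}. F s k) + F s (Suc N))"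
  proof (rule sum.cong)
    fix s assume "s \<in> {..N}"
    then have "{s<..Suc N} = insert (Suc N) {s<..N}" by auto
    then show "(\<Sum>k\<in>{s<..Suc N}. F s k) = (\<Sum>k\<in>{s<..N}. F s k) + F s (Suc N)"
      by (simp add: add.commute)
  qed simp
  finally show ?case using Suc by (simp add: sum.atMost_Suc sum.distrib lessThan_Suc_atMost)
qed

lemma sum_by_parts:
  fixes d y :: "nat \<Rightarrow> complex"
  assumes "j \<le> N"
  shows "(\<Sum>k\<in>{j..N}. d k * (y k - y (Suc k))) =
         d j * y j + (\<Sum>k\<in>{j<..N}. (d k - d (k - 1)) * y k) - d N * y (Suc N)"
  using assms
proof (induction N)
  case 0 then show ?case by (simp add: algebra_simps)
next
  case (Suc N)
  show ?case
  proof (cases "j = Suc N")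
    case True then show ?thesis by (simp add: algebra_simps)
  next
    case False
    with Suc.prems have jN: "j \<le> N" by simp
    have e1: "{j..Suc N} = insert (Suc N) {j..N}" using jN by (auto)
    have e2: "{j<..Suc N} = insert (Suc N) {j<..N}" using jN by (auto)
    show ?thesis using Suc.IH[OF jN] by (simp add: e1 e2 algebra_simps)
  qed
qed

lemma rnorm_pos: "\<alpha> > -1 \<Longrightarrow> rnorm \<alpha> k > 0"
  unfolding rnorm_def by (intro real_sqrt_gt_zero divide_pos_pos mult_pos_pos Gamma_real_pos) auto

lemma rnorm_0: "\<alpha> > -1 \<Longrightarrow> rnorm \<alpha> 0 = 1"
proof -
  assume "\<alpha> > -1"
  then have "Gamma (\<alpha> + 1) > 0" by (intro Gamma_real_pos) simp
  then show ?thesis unfolding rnorm_def by simp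
qed

lemma rnorm_sq: "\<alpha> > -1 \<Longrightarrow> (rnorm \<alpha> k)^2 = Gamma (real k + \<alpha> + 1) / (fact k * Gamma (\<alpha> + 1))"
  unfolding rnorm_def by (intro real_sqrt_pow2 divide_nonneg_pos mult_pos_pos Gamma_real_pos less_imp_le) auto

lemma rnorm_sq_Suc: "\<alpha> > -1 \<Longrightarrow> (rnorm \<alpha> (Suc k))^2 = (rnorm \<alpha> k)^2 * (real k + \<alpha> + 1) / (real k + 1)"
proof -
  assume a: "\<alpha> > -1"
  have "Gamma (real (Suc k) + \<alpha> + 1) = (real k + \<alpha> + 1) * Gamma (real k + \<alpha> + 1)"
  proof -
    have "real k + \<alpha> + 1 \<notin> \<int>\<^sub>\<le>\<^sub>0" using a nonpos_Ints_nonpos[of "real k + \<alpha> + 1"] by auto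
    from Gamma_plus1[OF this] show ?thesis by (simp add: add_ac)
  qed
  then show ?thesis using a by (simp add: rnorm_sq field_simps)
qed

interpretation lag: qbasis "laguerre \<beta>" for \<beta>
  by unfold_locales (auto simp: degree_laguerre coeff_laguerre_top)

lemma qt_basis: "\<alpha> > -1 \<Longrightarrow> qbasis (qt \<alpha>)"
  unfolding qbasis_def qt_def using rnorm_pos[of \<alpha>] less_imp_neq[OF rnorm_pos[of \<alpha>]]
  by (auto simp: degree_laguerre coeff_laguerre_top)

lemma smult_sum2: "smult a (\<Sum>i\<in>A. f i) = (\<Sum>i\<in>A. smult a (f i))"
  by (induction A rule: infinite_finite_induct) (simp_all add: smult_add_right)

definition dmf :: "(nat \<Rightarrow> complex) \<Rightarrow> nat \<Rightarrow> complex" where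
  "dmf d k = (if k = 0 then 0 else d (k - 1))"

definition Aop :: "(nat \<Rightarrow> complex) \<Rightarrow> (nat \<Rightarrow> real) \<Rightarrow> (nat \<Rightarrow> complex) \<Rightarrow> nat \<Rightarrow> complex" where
  "Aop d r g = (\<lambda>s. g s * d s + (\<Sum>j. (d (j + s + 1) - dmf d (j + s + 1)) * r s / r (j + s + 1) * g (j + s + 1)))"

lemma emb_sum:
  assumes "\<alpha> > -1" "\<forall>k>N. c k = 0"
  shows "emb \<alpha> (\<Sum>k\<le>N. smult (c k) (qt \<alpha> k)) = c"
  unfolding emb_def using qbasis.coords_eq[OF qt_basis[OF assms(1)] assms(2) refl] .

lemma emb_spec:
  assumes "\<alpha> > -1"
  shows "(\<forall>k>degree f. emb \<alpha> f k = 0) \<and> f = (\<Sum>k\<le>degree f. smult (emb \<alpha> f k) (qt \<alpha> k))"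
  unfolding emb_def using qbasis.coords_spec[OF qt_basis[OF assms(1)]] .

lemma Aop_fin:
  assumes "\<forall>k>N. c k = 0"
  shows "Aop d r c s = (if s \<le> N then c s * d s + (\<Sum>k\<in>{s<..N}. (d k - d (k - 1)) * r s / r k * c k) else 0)"
proof -
  have "(\<Sum>j. (d (j + s + 1) - dmf d (j + s + 1)) * r s / r (j + s + 1) * c (j + s + 1))
       = (\<Sum>k\<in>{s<..N}. (d k - dmf d k) * r s / r k * c k)"
    by (rule suminf_shift_fin[where h="\<lambda>k. (d k - dmf d k) * r s / r k * c k"]) (use assms in auto)
  also have "\<dots> = (\<Sum>k\<in>{s<..N}. (d k - d (k - 1)) * r s / r k * c k)"
    by (rule sum.cong) (auto simp: dmf_def)
  finally show ?thesis using assms by (auto simp: Aop_def)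
qed

lemma emb_Emap:
  assumes a: "\<alpha> > -1" and c: "\<forall>k>N. c k = 0"
  shows "emb \<alpha> (Emap (laguerre (\<alpha> + 1)) d (\<Sum>k\<le>N. smult (c k) (qt \<alpha> k))) = Aop d (rnorm \<alpha>) c"
proof -
  let ?r = "rnorm \<alpha>"
  let ?P = "laguerre (\<alpha> + 1)"
  define y where "y k = c k / complex_of_real (?r k)" for k
  define b where "b k = (if k \<le> N then y k - y (Suc k) else 0)" for k
  have rnz: "complex_of_real (?r k) \<noteq> 0" for k using rnorm_pos[OF a, of k] by simp
  have yN: "y (Suc N) = 0" using c by (simp add: y_def)
  have "(\<Sum>k\<le>N. smult (c k) (qt \<alpha> k)) = (\<Sum>k\<le>N. smult (y k) (laguerre \<alpha> k))"
    by (rule sum.cong) (auto simp: qt_def y_def divide_inverse)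
  also have "\<dots> = (\<Sum>k\<le>N. smult (y k) (?P k - (if k = 0 then 0 else ?P (k - 1))))"
    by (rule sum.cong, simp, subst laguerre_diff, simp)
  also have "\<dots> = (\<Sum>k\<le>N. smult (b k) (?P k))"
    by (simp add: telescope_poly yN b_def)
  finally have f: "(\<Sum>k\<le>N. smult (c k) (qt \<alpha> k)) = (\<Sum>k\<le>N. smult (b k) (?P k))" .
  have bN: "\<forall>k>N. b k = 0" by (simp add: b_def)
  have lq: "laguerre \<alpha> j = smult (complex_of_real (?r j)) (qt \<alpha> j)" for j
    using rnz[of j] by (simp add: qt_def)
  have "Emap ?P d (\<Sum>k\<le>N. smult (c k) (qt \<alpha> k)) = (\<Sum>k\<le>N. smult (d k * b k) (?P k))"
    unfolding f by (rule lag.Emap_repr[OF bN])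
  also have "\<dots> = (\<Sum>k\<le>N. \<Sum>j\<le>k. smult (d k * b k * complex_of_real (?r j)) (qt \<alpha> j))"
    by (simp add: laguerre_sum smult_sum2 lq)
  also have "\<dots> = (\<Sum>j\<le>N. \<Sum>k\<in>{j..N}. smult (d k * b k * complex_of_real (?r j)) (qt \<alpha> j))"
    by (rule swap_tri)
  also have "\<dots> = (\<Sum>j\<le>N. smult (complex_of_real (?r j) * (\<Sum>k\<in>{j..N}. d k * b k)) (qt \<alpha> j))"
    by (simp add: smult_sum sum_distrib_left mult_ac)
  finally have E: "Emap ?P d (\<Sum>k\<le>N. smult (c k) (qt \<alpha> k)) = \<dots>" .
  show ?thesis
  proof
    fix s
    have "emb \<alpha> (Emap ?P d (\<Sum>k\<le>N. smult (c k) (qt \<alpha> k))) s =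
        (if s \<le> N then complex_of_real (?r s) * (\<Sum>k\<in>{s..N}. d k * b k) else 0)"
      unfolding E by (subst emb_sum[OF a]) auto
    also have "\<dots> = Aop d ?r c s"
    proof (cases "s \<le> N")
      case True
      have "(\<Sum>k\<in>{s..N}. d k * b k) = (\<Sum>k\<in>{s..N}. d k * (y k - y (Suc k)))"
        by (rule sum.cong) (auto simp: b_def)
      also have "\<dots> = d s * y s + (\<Sum>k\<in>{s<..N}. (d k - d (k - 1)) * y k)"
        using sum_by_parts[OF True, of d y] yN by simp
      finally have "complex_of_real (?r s) * (\<Sum>k\<in>{s..N}. d k * b k) =
          c s * d s + (\<Sum>k\<in>{s<..N}. (d k - d (k - 1)) * complex_of_real (?r s) / complex_of_real (?r k) * c k)"
        using rnz[of s] by (simp add: y_def distrib_left sum_distrib_left field_simps)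
      then show ?thesis using True by (simp add: Aop_fin[OF c])
    next
      case False then show ?thesis by (simp add: Aop_fin[OF c])
    qed
    finally show "emb \<alpha> (Emap ?P d (\<Sum>k\<le>N. smult (c k) (qt \<alpha> k))) s = Aop d ?r c s" .
  qed
qed

lemma op_graph_char:
  assumes a: "\<alpha> > -1"
  shows "op_graph \<alpha> (Emap (laguerre (\<alpha> + 1)) d) =
         {(c, Aop d (rnorm \<alpha>) c) | c. \<exists>N. \<forall>k>N. c k = 0}"
proof safe
  fix x y assume "(x, y) \<in> op_graph \<alpha> (Emap (laguerre (\<alpha> + 1)) d)"
  then obtain f where xy: "x = emb \<alpha> f" "y = emb \<alpha> (Emap (laguerre (\<alpha> + 1)) d f)"
    by (auto simp: op_graph_def)
  have sp: "\<forall>k>degree f. x k = 0" "f = (\<Sum>k\<le>degree f. smult (x k) (qt \<alpha> k))"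
    using emb_spec[OF a, of f] xy by auto
  have "y = Aop d (rnorm \<alpha>) x" using xy(2) emb_Emap[OF a sp(1), of d] sp(2) by simp
  then show "\<exists>c. (x, y) = (c, Aop d (rnorm \<alpha>) c) \<and> (\<exists>N. \<forall>k>N. c k = 0)"
    using sp(1) by blast
next
  fix c :: "nat \<Rightarrow> complex" and N :: nat assume c: "\<forall>k>N. c k = 0"
  let ?f = "\<Sum>k\<le>N. smult (c k) (qt \<alpha> k)"
  have "c = emb \<alpha> ?f" "Aop d (rnorm \<alpha>) c = emb \<alpha> (Emap (laguerre (\<alpha> + 1)) d ?f)"
    using emb_sum[OF a c] emb_Emap[OF a c] by auto
  then show "(c, Aop d (rnorm \<alpha>) c) \<in> op_graph \<alpha> (Emap (laguerre (\<alpha> + 1)) d)"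
    unfolding op_graph_def by blast
qed


lemma sq_bound: "cmod (x * cnj y) \<le> (cmod x)^2 + (cmod y)^2"
proof -
  have "cmod (x * cnj y) = cmod x * cmod y" by (simp add: norm_mult)
  also have "\<dots> \<le> (cmod x)^2 + (cmod y)^2"
  proof -
    have h1: "2 * (cmod x * cmod y) \<le> (cmod x)^2 + (cmod y)^2"
      using sum_squares_bound[of "cmod x" "cmod y"] by (simp add: mult.assoc)
    have h2: "0 \<le> cmod x * cmod y" by simp
    from h1 h2 show ?thesis by linarith
  qed
  finally show ?thesis .
qed

lemma sq_bound2: "(cmod (x + y))^2 \<le> 2 * (cmod x)^2 + 2 * (cmod y)^2"
proof -
  have "cmod (x + y) \<le> cmod x + cmod y" by (rule norm_triangle_ineq)
  then have "(cmod (x + y))^2 \<le> (cmod x + cmod y)^2" by (simp add: power_mono)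
  also have "\<dots> \<le> 2 * (cmod x)^2 + 2 * (cmod y)^2"
    using sum_squares_bound[of "cmod x" "cmod y"] by (simp add: power2_eq_square algebra_simps)
  finally show ?thesis .
qed

lemma l2_fin: "\<forall>k>N. c k = 0 \<Longrightarrow> l2 c"
  unfolding l2_def by (rule summable_finite[of "{..N}"]) auto

lemma l2_add: "l2 x \<Longrightarrow> l2 y \<Longrightarrow> l2 (\<lambda>k. x k + y k)"
  unfolding l2_def
proof -
  assume a: "summable (\<lambda>k. (cmod (x k))\<^sup>2)" "summable (\<lambda>k. (cmod (y k))\<^sup>2)"
  have "summable (\<lambda>k. 2 * (cmod (x k))\<^sup>2 + 2 * (cmod (y k))\<^sup>2)"
    using a by (intro summable_add summable_mult)
  then show "summable (\<lambda>k. (cmod (x k + y k))\<^sup>2)"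
    by (rule summable_comparison_test[rotated]) (auto intro!: exI[of _ 0] simp: sq_bound2)
qed

lemma l2_scale: "l2 x \<Longrightarrow> l2 (\<lambda>k. c * x k)"
  unfolding l2_def by (simp add: norm_mult power_mult_distrib)

lemma l2_minus: "l2 x \<Longrightarrow> l2 (\<lambda>k. - x k)"
  unfolding l2_def by simp

lemma l2_diff: "l2 x \<Longrightarrow> l2 y \<Longrightarrow> l2 (\<lambda>k. x k - y k)"
  using l2_add[of x "\<lambda>k. - y k"] l2_minus[of y] by simp

lemma l2_diff': "l2 x \<Longrightarrow> l2 y \<Longrightarrow> l2 (x - y)"
  using l2_diff[of x y] by (simp add: fun_diff_def)

lemma summable_inner_norm: "l2 x \<Longrightarrow> l2 y \<Longrightarrow> summable (\<lambda>k. cmod (x k * cnj (y k)))"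
  unfolding l2_def
proof -
  assume a: "summable (\<lambda>k. (cmod (x k))\<^sup>2)" "summable (\<lambda>k. (cmod (y k))\<^sup>2)"
  have "summable (\<lambda>k. (cmod (x k))\<^sup>2 + (cmod (y k))\<^sup>2)"
    using a by (intro summable_add)
  then show "summable (\<lambda>k. cmod (x k * cnj (y k)))"
    by (rule summable_comparison_test[rotated]) (auto intro!: exI[of _ 0] simp: sq_bound)
qed

lemma summable_inner: "l2 x \<Longrightarrow> l2 y \<Longrightarrow> summable (\<lambda>k. x k * cnj (y k))"
  by (rule summable_norm_cancel) (rule summable_inner_norm)

lemma summable_prod_norm: "l2 x \<Longrightarrow> l2 y \<Longrightarrow> summable (\<lambda>k. cmod (x k * y k))"
  using summable_inner_norm[of x "\<lambda>k. cnj (y k)"] by (simp add: l2_def)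

lemma summable_prod: "l2 x \<Longrightarrow> l2 y \<Longrightarrow> summable (\<lambda>k. x k * y k)"
  by (rule summable_norm_cancel) (rule summable_prod_norm)

lemma l2_suminf_nonneg: "0 \<le> (\<Sum>k. (cmod (x k))^2)" if "l2 x"
  using that unfolding l2_def by (intro suminf_nonneg) auto

lemma coord_le: "l2 x \<Longrightarrow> cmod (x n) \<le> l2norm x"
proof -
  assume l: "l2 x"
  have "(\<Sum>k\<in>{n}. (cmod (x k))^2) \<le> (\<Sum>k. (cmod (x k))^2)"
    using l unfolding l2_def by (intro sum_le_suminf) auto
  then have "(cmod (x n))^2 \<le> (\<Sum>k. (cmod (x k))^2)" by simp
  then have "sqrt ((cmod (x n))^2) \<le> l2norm x" unfolding l2norm_def by (rule real_sqrt_le_mono)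
  then show ?thesis by simp
qed

lemma CS: assumes "l2 x" "l2 y" shows "cmod (l2inner x y) \<le> l2norm x * l2norm y"
proof -
  have s: "summable (\<lambda>k. cmod (x k * cnj (y k)))" by (rule summable_inner_norm[OF assms])
  have "cmod (l2inner x y) \<le> (\<Sum>k. cmod (x k * cnj (y k)))"
    unfolding l2inner_def by (rule summable_norm[OF s])
  also have "\<dots> \<le> l2norm x * l2norm y"
  proof (rule suminf_le_const[OF s])
    fix n
    have "(\<Sum>k<n. cmod (x k * cnj (y k))) = (\<Sum>k<n. \<bar>cmod (x k)\<bar> * \<bar>cmod (y k)\<bar>)"
      by (simp add: norm_mult)
    also have "\<dots> \<le> L2_set (\<lambda>k. cmod (x k)) {..<n} * L2_set (\<lambda>k. cmod (y k)) {..<n}"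
      by (rule L2_set_mult_ineq)
    also have "\<dots> \<le> l2norm x * l2norm y"
    proof (rule mult_mono)
      show "L2_set (\<lambda>k. cmod (x k)) {..<n} \<le> l2norm x"
        unfolding L2_set_def l2norm_def using assms(1) unfolding l2_def
        by (intro real_sqrt_le_mono sum_le_suminf) auto
      show "L2_set (\<lambda>k. cmod (y k)) {..<n} \<le> l2norm y"
        unfolding L2_set_def l2norm_def using assms(2) unfolding l2_def
        by (intro real_sqrt_le_mono sum_le_suminf) auto
      show "0 \<le> l2norm x" unfolding l2norm_def using l2_suminf_nonneg[OF assms(1)] by simp
      show "0 \<le> L2_set (\<lambda>k. cmod (y k)) {..<n}" by (rule L2_set_nonneg)
    qed
    finally show "(\<Sum>k<n. cmod (x k * cnj (y k))) \<le> l2norm x * l2norm y" .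
  qed
  finally show ?thesis .
qed

lemma l2inner_diff: "l2 x \<Longrightarrow> l2 y \<Longrightarrow> l2 v \<Longrightarrow> l2inner (x - y) v = l2inner x v - l2inner y v"
  unfolding l2inner_def
  by (simp add: left_diff_distrib suminf_diff summable_inner)

lemma l2inner_fin: "\<forall>k>N. c k = 0 \<Longrightarrow> l2inner c g = (\<Sum>k\<le>N. c k * cnj (g k))"
  unfolding l2inner_def by (rule suminf_finite) auto


definition Bop :: "(nat \<Rightarrow> complex) \<Rightarrow> (nat \<Rightarrow> real) \<Rightarrow> (nat \<Rightarrow> complex) \<Rightarrow> nat \<Rightarrow> complex" where
  "Bop d r g = (\<lambda>k. cnj (d k) * g k + (\<Sum>t<k. (cnj (d k) - cnj (dmf d k)) * r t * g t / r k))"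

definition del :: "nat \<Rightarrow> nat \<Rightarrow> complex" where
  "del n = (\<lambda>k. if k = n then 1 else 0)"

definition Gfin :: "(nat \<Rightarrow> complex) \<Rightarrow> (nat \<Rightarrow> real) \<Rightarrow> ((nat \<Rightarrow> complex) \<times> (nat \<Rightarrow> complex)) set" where
  "Gfin d r = {(c, Aop d r c) | c. \<exists>N. \<forall>k>N. c k = 0}"

lemma cnj_Bop: "cnj (Bop d r g k) = d k * cnj (g k) + (\<Sum>t<k. (d k - dmf d k) * r t * cnj (g t) / r k)"
  by (simp add: Bop_def cnj_sum)

lemma key_identity:
  assumes c: "\<forall>k>N. c k = 0"
  shows "l2inner (Aop d r c) g = (\<Sum>k\<le>N. c k * cnj (Bop d r g k))"
proof -
  have A0: "\<forall>k>N. Aop d r c k = 0" using Aop_fin[OF c] by auto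
  have "l2inner (Aop d r c) g = (\<Sum>s\<le>N. Aop d r c s * cnj (g s))" by (rule l2inner_fin[OF A0])
  also have "\<dots> = (\<Sum>s\<le>N. c s * d s * cnj (g s) + (\<Sum>k\<in>{s<..N}. (d k - d (k - 1)) * r s / r k * c k * cnj (g s)))"
    by (rule sum.cong) (auto simp: Aop_fin[OF c] sum_distrib_right distrib_right)
  also have "\<dots> = (\<Sum>s\<le>N. c s * d s * cnj (g s)) + (\<Sum>s\<le>N. \<Sum>k\<in>{s<..N}. (d k - d (k - 1)) * r s / r k * c k * cnj (g s))"
    by (rule sum.distrib)
  also have "(\<Sum>s\<le>N. \<Sum>k\<in>{s<..N}. (d k - d (k - 1)) * r s / r k * c k * cnj (g s)) =
             (\<Sum>k\<le>N. \<Sum>s<k. (d k - d (k - 1)) * r s / r k * c k * cnj (g s))"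
    by (rule swap_strict)
  also have "(\<Sum>s\<le>N. c s * d s * cnj (g s)) + (\<Sum>k\<le>N. \<Sum>s<k. (d k - d (k - 1)) * r s / r k * c k * cnj (g s))
      = (\<Sum>k\<le>N. c k * cnj (Bop d r g k))"
    unfolding sum.distrib[symmetric]
  proof (rule sum.cong)
    fix k assume "k \<in> {..N}"
    have "(\<Sum>s<k. (d k - d (k - 1)) * r s / r k * c k * cnj (g s)) = c k * (\<Sum>t<k. (d k - dmf d k) * r t * cnj (g t) / r k)"
      unfolding sum_distrib_left by (rule sum.cong) (auto simp: dmf_def)
    then show "c k * d k * cnj (g k) + (\<Sum>s<k. (d k - d (k - 1)) * r s / r k * c k * cnj (g s)) =
      c k * cnj (Bop d r g k)"
      by (simp add: cnj_Bop distrib_left)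
  qed simp
  finally show ?thesis .
qed

lemma sum_delta_mult: "(\<Sum>k\<le>(n::nat). (if k = n then 1 else 0) * (f k :: complex)) = f n"
proof -
  have "(\<Sum>k\<le>n. (if k = n then 1 else 0) * f k) = (\<Sum>k\<le>n. if k = n then f k else 0)"
    by (rule sum.cong) auto
  also have "\<dots> = f n" by simp
  finally show ?thesis .
qed

lemma del_fin: "\<forall>k>n. del n k = 0" by (simp add: del_def)

lemma Aop_del_inner: "l2inner (Aop d r (del n)) g = cnj (Bop d r g n)"
  using key_identity[OF del_fin[of n], of d r g] by (simp add: del_def sum_delta_mult)

lemma inner_del: "l2inner (del n) h = cnj (h n)"
  using l2inner_fin[OF del_fin[of n], of h] by (simp add: del_def sum_delta_mult)

lemma del_in_Gfin: "(del n, Aop d r (del n)) \<in> Gfin d r"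
  unfolding Gfin_def using del_fin by blast

lemma adj_char:
  assumes "\<forall>(f, y)\<in>Gfin d r. l2inner y g = l2inner f h"
  shows "h = Bop d r g"
proof
  fix n
  have "l2inner (Aop d r (del n)) g = l2inner (del n) h" using assms del_in_Gfin by blast
  then have "cnj (Bop d r g n) = cnj (h n)" by (simp add: Aop_del_inner inner_del)
  then show "h n = Bop d r g n" by simp
qed

lemma Bop_works:
  "\<forall>(f, y)\<in>Gfin d r. l2inner y g = l2inner f (Bop d r g)"
proof (clarify)
  fix f y assume "(f, y) \<in> Gfin d r"
  then obtain N where f: "\<forall>k>N. f k = 0" and y: "y = Aop d r f" unfolding Gfin_def by blast
  show "l2inner y g = l2inner f (Bop d r g)"
    using key_identity[OF f, of d r g] l2inner_fin[OF f, of "Bop d r g"] y by simp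
qed

lemma adj_dom_iff: "l2 g \<Longrightarrow> g \<in> adj_dom (Gfin d r) \<longleftrightarrow> l2 (Bop d r g)"
  unfolding adj_dom_def using adj_char Bop_works by blast

lemma adj_eq: "g \<in> adj_dom (Gfin d r) \<Longrightarrow> adj (Gfin d r) g = Bop d r g"
  unfolding adj_def using adj_char Bop_works adj_dom_iff unfolding adj_dom_def
  by (intro the_equality) blast+


lemma Bop_del: "Bop d r (del s) k =
  (if k = s then cnj (d s) else if s < k then (cnj (d k) - cnj (dmf d k)) * r s / r k else 0)"
proof -
  have "(\<Sum>t<k. (cnj (d k) - cnj (dmf d k)) * r t * del s t / r k) =
        (\<Sum>t<k. if t = s then (cnj (d k) - cnj (dmf d k)) * r s / r k else 0)"
    by (rule sum.cong) (auto simp: del_def)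
  also have "\<dots> = (if s < k then (cnj (d k) - cnj (dmf d k)) * r s / r k else 0)"
    by (subst sum.delta) auto
  finally show ?thesis by (auto simp: Bop_def del_def)
qed

lemma l2_Bop_del:
  assumes "r s \<noteq> 0"
  shows "l2 (Bop d r (del s)) \<longleftrightarrow> l2 (\<lambda>k. (cnj (d k) - cnj (dmf d k)) / r k)"
proof -
  have "eventually (\<lambda>k. (cmod (Bop d r (del s) k))^2 = (r s)^2 * (cmod ((cnj (d k) - cnj (dmf d k)) / r k))^2) sequentially"
    using eventually_gt_at_top[of s]
    by eventually_elim (simp add: Bop_del norm_mult norm_divide power_mult_distrib power_divide)
  then have "summable (\<lambda>k. (cmod (Bop d r (del s) k))^2) \<longleftrightarrow>
             summable (\<lambda>k. (r s)^2 * (cmod ((cnj (d k) - cnj (dmf d k)) / r k))^2)"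
    by (rule summable_cong)
  then show ?thesis using assms unfolding l2_def by simp
qed

lemma inner_Bop_del:
  assumes g: "l2 g" and v: "l2 (Bop d r (del n))"
  shows "l2inner g (Bop d r (del n)) = Aop d r g n"
proof -
  let ?f = "\<lambda>k. g k * cnj (Bop d r (del n) k)"
  have s: "summable ?f" by (rule summable_inner[OF g v])
  have "l2inner g (Bop d r (del n)) = (\<Sum>i. ?f (i + Suc n)) + (\<Sum>i<Suc n. ?f i)"
    unfolding l2inner_def by (rule suminf_split_initial_segment[OF s])
  also have "(\<Sum>i<Suc n. ?f i) = g n * d n"
  proof -
    have "(\<Sum>i<Suc n. ?f i) = (\<Sum>i<Suc n. if i = n then g n * d n else 0)"
      by (rule sum.cong) (auto simp: Bop_del)
    also have "\<dots> = g n * d n" by (subst sum.delta) auto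
    finally show ?thesis .
  qed
  also have "(\<Sum>i. ?f (i + Suc n)) = (\<Sum>j. (d (j + n + 1) - dmf d (j + n + 1)) * r n / r (j + n + 1) * g (j + n + 1))"
    by (rule suminf_cong) (simp add: Bop_del mult_ac)
  finally show ?thesis by (simp add: Aop_def add_ac)
qed

lemma Gfin_mem: "z \<in> Gfin d r \<longleftrightarrow> (\<exists>N. \<forall>k>N. fst z k = 0) \<and> snd z = Aop d r (fst z)"
  unfolding Gfin_def by (cases z) auto

lemma closure_unique:
  assumes la: "\<And>n. l2 (Bop d r (del n))"
    and gh: "(g, h) \<in> graph_closure (Gfin d r)"
  shows "h = Aop d r g"
proof
  fix n
  from gh obtain F where g: "l2 g" and h: "l2 h" and F: "\<forall>m. F m \<in> Gfin d r"
    and c1: "(\<lambda>m. l2norm (fst (F m) - g)) \<longlonglongrightarrow> 0"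
    and c2: "(\<lambda>m. l2norm (snd (F m) - h)) \<longlonglongrightarrow> 0"
    unfolding graph_closure_def mem_Collect_eq case_prod_conv by blast
  have Fm: "\<exists>N. \<forall>k>N. fst (F m) k = 0" "snd (F m) = Aop d r (fst (F m))" for m
    using F[rule_format, of m] unfolding Gfin_mem by simp_all
  have l2c: "l2 (fst (F m))" for m using Fm(1)[of m] l2_fin by blast
  have l2A: "l2 (snd (F m))" for m
  proof -
    obtain N where N: "\<forall>k>N. fst (F m) k = 0" using Fm(1) by blast
    have "\<forall>k>N. snd (F m) k = 0" unfolding Fm(2)[of m] by (auto simp: Aop_fin[OF N])
    then show ?thesis by (rule l2_fin)
  qed
  let ?v = "Bop d r (del n)"
  have lim1: "(\<lambda>m. snd (F m) n) \<longlonglongrightarrow> h n"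
  proof -
    have "(\<lambda>m. snd (F m) n - h n) \<longlonglongrightarrow> 0"
    proof (rule Lim_null_comparison[OF _ c2])
      show "\<forall>\<^sub>F m in sequentially. norm (snd (F m) n - h n) \<le> l2norm (snd (F m) - h)"
      proof (intro always_eventually allI)
        fix m
        have "cmod ((snd (F m) - h) n) \<le> l2norm (snd (F m) - h)" by (rule coord_le[OF l2_diff'[OF l2A h]])
        then show "norm (snd (F m) n - h n) \<le> l2norm (snd (F m) - h)" by simp
      qed
    qed
    then show ?thesis by (simp add: LIM_zero_iff)
  qed
  have lim2: "(\<lambda>m. snd (F m) n) \<longlonglongrightarrow> l2inner g ?v"
  proof -
    have eq: "snd (F m) n = l2inner (fst (F m)) ?v" for m
      using inner_Bop_del[OF l2c la, of m n] Fm(2)[of m] by simp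
    have "(\<lambda>m. l2inner (fst (F m)) ?v - l2inner g ?v) \<longlonglongrightarrow> 0"
    proof (rule Lim_null_comparison)
      show "\<forall>\<^sub>F m in sequentially. norm (l2inner (fst (F m)) ?v - l2inner g ?v) \<le> l2norm (fst (F m) - g) * l2norm ?v"
      proof (intro always_eventually allI)
        fix m
        have "cmod (l2inner (fst (F m) - g) ?v) \<le> l2norm (fst (F m) - g) * l2norm ?v"
          by (rule CS[OF l2_diff'[OF l2c g] la])
        then show "norm (l2inner (fst (F m)) ?v - l2inner g ?v) \<le> l2norm (fst (F m) - g) * l2norm ?v"
          by (simp only: l2inner_diff[OF l2c g la])
      qed
      show "(\<lambda>m. l2norm (fst (F m) - g) * l2norm ?v) \<longlonglongrightarrow> 0"
        using tendsto_mult_left_zero[OF c1, of "l2norm ?v"] by simp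
    qed
    then show ?thesis by (simp add: LIM_zero_iff eq)
  qed
  have "h n = l2inner g ?v" using LIMSEQ_unique[OF lim1 lim2] .
  also have "\<dots> = Aop d r g n" by (rule inner_Bop_del[OF g la])
  finally show "h n = Aop d r g n" .
qed


lemma Rsum: "\<alpha> > -1 \<Longrightarrow> (\<Sum>s\<le>m. (rnorm \<alpha> s)^2) = (rnorm \<alpha> m)^2 * (real m + \<alpha> + 1) / (\<alpha> + 1)"
proof (induction m)
  case 0 then show ?case by (simp add: rnorm_0)
next
  case (Suc m)
  have "(\<Sum>s\<le>Suc m. (rnorm \<alpha> s)^2) = (rnorm \<alpha> m)^2 * (real m + \<alpha> + 1) / (\<alpha> + 1) + (rnorm \<alpha> (Suc m))^2"
    using Suc by simp
  also have "(rnorm \<alpha> m)^2 * (real m + \<alpha> + 1) = (rnorm \<alpha> (Suc m))^2 * (real m + 1)"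
    using rnorm_sq_Suc[OF Suc.prems, of m] Suc.prems by (simp add: field_simps)
  finally show ?case using Suc.prems by (simp add: field_simps)
qed

lemma tele_d: "s \<le> (m::nat) \<Longrightarrow> (\<Sum>k\<in>{s<..m}. d k - d (k - 1)) = d m - (d s :: complex)"
proof (induction m)
  case 0 then show ?case by simp
next
  case (Suc m)
  show ?case
  proof (cases "s = Suc m")
    case True then show ?thesis by simp
  next
    case False
    then have sm: "s \<le> m" using Suc.prems by simp
    have "{s<..Suc m} = insert (Suc m) {s<..m}" using sm by auto
    then show ?thesis using Suc.IH[OF sm] by simp
  qed
qed

lemma liminf_lemma:
  fixes W :: "nat \<Rightarrow> real"
  assumes W: "summable W" "\<And>m. W m \<ge> 0" and e: "e > 0"
  shows "\<exists>m\<ge>M. W m * (real m + 1) < e"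
proof (rule ccontr)
  assume "\<not> ?thesis"
  then have b: "\<And>m. m \<ge> M \<Longrightarrow> e * inverse (real (Suc m)) \<le> W m"
    using e by (auto simp: field_simps not_less)
  have "summable (\<lambda>m. inverse e * W m)" using W by simp
  then have "summable (\<lambda>m. inverse (real (Suc m)))"
  proof (rule summable_comparison_test'[where N=M])
    fix m assume "m \<ge> M"
    have "e * inverse (real (Suc m)) \<le> W m" using b \<open>m \<ge> M\<close> by simp
    then show "norm (inverse (real (Suc m))) \<le> inverse e * W m" using e by (simp add: field_simps)
  qed
  then have "summable (\<lambda>m. inverse (real m))"
    using summable_Suc_iff[of "\<lambda>m. inverse (real m)"] by simp
  then show False using not_summable_harmonic by blast
qed

lemma norm_split:
  fixes y :: "nat \<Rightarrow> complex" and r :: "nat \<Rightarrow> real"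
  assumes "l2 y"
  shows "(\<Sum>s. (cmod (if s \<le> m then complex_of_real (r s) * \<mu> else y s))^2) =
         (cmod \<mu>)^2 * (\<Sum>s\<le>m. (r s)^2) + (\<Sum>j. (cmod (y (j + Suc m)))^2)"
proof -
  let ?f = "\<lambda>s. (cmod (if s \<le> m then complex_of_real (r s) * \<mu> else y s))^2"
  have "eventually (\<lambda>s. ?f s = (cmod (y s))^2) sequentially"
    using eventually_gt_at_top[of m] by eventually_elim simp
  then have s: "summable ?f" using assms unfolding l2_def by (subst summable_cong) auto
  have "(\<Sum>s. ?f s) = (\<Sum>j. ?f (j + Suc m)) + (\<Sum>s<Suc m. ?f s)"
    by (rule suminf_split_initial_segment[OF s])
  also have "(\<Sum>s<Suc m. ?f s) = (cmod \<mu>)^2 * (\<Sum>s\<le>m. (r s)^2)"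
    unfolding lessThan_Suc_atMost sum_distrib_left
    by (rule sum.cong) (auto simp: norm_mult power_mult_distrib)
  also have "(\<Sum>j. ?f (j + Suc m)) = (\<Sum>j. (cmod (y (j + Suc m)))^2)" by simp
  finally show ?thesis by simp
qed

lemma tail_small:
  assumes "l2 y" "e > 0"
  shows "\<exists>N. \<forall>m\<ge>N. (\<Sum>j. (cmod (y (j + Suc m)))^2) < e"
proof -
  obtain N where N: "\<forall>n\<ge>N. norm (\<Sum>i. (cmod (y (i + n)))^2) < e"
    using suminf_exist_split[OF assms(2)] assms(1) unfolding l2_def by blast
  show ?thesis
  proof (intro exI allI impI)
    fix m assume "N \<le> m"
    then have "Suc m \<ge> N" by simp
    from N[rule_format, OF this] show "(\<Sum>j. (cmod (y (j + Suc m)))^2) < e" by simp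
  qed
qed

context
  fixes \<alpha> :: real and d :: "nat \<Rightarrow> complex" and g :: "nat \<Rightarrow> complex"
  assumes \<alpha>: "\<alpha> > -1"
    and la: "l2 (\<lambda>k. (cnj (d k) - cnj (dmf d k)) / complex_of_real (rnorm \<alpha> k))"
    and g: "l2 g"
begin

definition w :: "nat \<Rightarrow> complex" where
  "w k = (d k - dmf d k) / complex_of_real (rnorm \<alpha> k) * g k"

definition tau :: "nat \<Rightarrow> complex" where
  "tau s = (\<Sum>j. w (j + s + 1))"

lemma la': "l2 (\<lambda>k. (d k - dmf d k) / complex_of_real (rnorm \<alpha> k))"
proof -
  have "cmod ((cnj (d k) - cnj (dmf d k)) / complex_of_real (rnorm \<alpha> k)) =
        cmod ((d k - dmf d k) / complex_of_real (rnorm \<alpha> k))" for k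
  proof -
    have "(cnj (d k) - cnj (dmf d k)) / complex_of_real (rnorm \<alpha> k) =
          cnj ((d k - dmf d k) / complex_of_real (rnorm \<alpha> k))" by simp
    then show ?thesis by (simp only: complex_mod_cnj)
  qed
  then show ?thesis using la unfolding l2_def by simp
qed

lemma summable_w: "summable w"
  unfolding w_def by (rule summable_prod[OF la' g])

lemma summable_w_shift: "summable (\<lambda>j. w (j + s + 1))"
  using summable_ignore_initial_segment[OF summable_w, of "s + 1"] by (simp add: add.assoc)

lemma rnz: "complex_of_real (rnorm \<alpha> k) \<noteq> 0"
  using rnorm_pos[OF \<alpha>, of k] by simp

lemma Aop_tau: "Aop d (rnorm \<alpha>) g s = g s * d s + complex_of_real (rnorm \<alpha> s) * tau s"
proof -
  have "(\<Sum>j. (d (j + s + 1) - dmf d (j + s + 1)) * complex_of_real (rnorm \<alpha> s) / complex_of_real (rnorm \<alpha> (j + s + 1)) * g (j + s + 1))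
      = (\<Sum>j. complex_of_real (rnorm \<alpha> s) * w (j + s + 1))"
    by (rule suminf_cong) (simp add: w_def)
  also have "\<dots> = complex_of_real (rnorm \<alpha> s) * tau s"
    unfolding tau_def by (rule suminf_mult[OF summable_w_shift])
  finally show ?thesis by (simp add: Aop_def)
qed

lemma tau_split: "s \<le> m \<Longrightarrow> tau s = (\<Sum>k\<in>{s<..m}. w k) + tau m"
proof -
  assume sm: "s \<le> m"
  have "tau s = (\<Sum>i. w (i + (m - s) + s + 1)) + (\<Sum>i<m - s. w (i + s + 1))"
    unfolding tau_def by (rule suminf_split_initial_segment[OF summable_w_shift])
  also have "(\<Sum>i. w (i + (m - s) + s + 1)) = tau m"
    unfolding tau_def using sm by (intro suminf_cong) simp
  also have "(\<Sum>i<m - s. w (i + s + 1)) = (\<Sum>k\<in>{s<..m}. w k)"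
    by (rule sum.reindex_bij_witness[where i="\<lambda>k. k - s - 1" and j="\<lambda>i. i + s + 1"]) auto
  finally show ?thesis by simp
qed

lemma Aop_approx:
  fixes lam :: complex and m :: nat
  defines "c \<equiv> (\<lambda>s. if s \<le> m then g s + lam * complex_of_real (rnorm \<alpha> s) else 0)"
  shows "Aop d (rnorm \<alpha>) c s = (if s \<le> m then Aop d (rnorm \<alpha>) g s - complex_of_real (rnorm \<alpha> s) * tau m
            + lam * complex_of_real (rnorm \<alpha> s) * d m else 0)"
proof -
  let ?r = "\<lambda>k. complex_of_real (rnorm \<alpha> k)"
  have cf: "\<forall>k>m. c k = 0" by (simp add: c_def)
  show ?thesis
  proof (cases "s \<le> m")
    case False then show ?thesis by (simp add: Aop_fin[OF cf])
  next
    case True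
    have "(\<Sum>k\<in>{s<..m}. (d k - d (k - 1)) * ?r s / ?r k * c k) =
          (\<Sum>k\<in>{s<..m}. ?r s * w k + lam * ?r s * (d k - d (k - 1)))"
    proof (rule sum.cong)
      fix k assume k: "k \<in> {s<..m}"
      then have "dmf d k = d (k - 1)" by (auto simp: dmf_def)
      then show "(d k - d (k - 1)) * ?r s / ?r k * c k = ?r s * w k + lam * ?r s * (d k - d (k - 1))"
        using k rnz[of k] by (simp add: c_def w_def field_simps)
    qed simp
    also have "\<dots> = ?r s * (\<Sum>k\<in>{s<..m}. w k) + lam * ?r s * (\<Sum>k\<in>{s<..m}. d k - d (k - 1))"
      by (simp add: sum.distrib sum_distrib_left)
    also have "\<dots> = ?r s * (tau s - tau m) + lam * ?r s * (d m - d s)"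
      using tau_split[OF True] tele_d[OF True, of d] by simp
    finally have e: "(\<Sum>k\<in>{s<..m}. (d k - d (k - 1)) * ?r s / ?r k * c k) = ?r s * (tau s - tau m) + lam * ?r s * (d m - d s)" .
    have "Aop d (rnorm \<alpha>) c s = c s * d s + (\<Sum>k\<in>{s<..m}. (d k - d (k - 1)) * ?r s / ?r k * c k)"
      using True by (simp add: Aop_fin[OF cf])
    also have "\<dots> = (g s + lam * ?r s) * d s + (?r s * (tau s - tau m) + lam * ?r s * (d m - d s))"
      using True by (simp only: e) (simp add: c_def)
    finally show ?thesis using True by (simp add: Aop_tau algebra_simps)
  qed
qed

lemma lam_choice:
  assumes "l2 (Aop d (rnorm \<alpha>) g)"
  shows "\<exists>lam. (cmod lam)^2 * (rnorm \<alpha> m)^2 \<le> 2 * ((cmod (Aop d (rnorm \<alpha>) g m))^2 + (cmod (g m))^2)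
      \<and> (cmod (lam * d m - tau m))^2 * (rnorm \<alpha> m)^2 \<le> 2 * ((cmod (Aop d (rnorm \<alpha>) g m))^2 + (cmod (g m))^2)"
proof -
  let ?G = "Aop d (rnorm \<alpha>) g m"
  let ?r = "complex_of_real (rnorm \<alpha> m)"
  have G: "?G = g m * d m + ?r * tau m" by (rule Aop_tau)
  have W0: "0 \<le> (cmod ?G)^2 + (cmod (g m))^2" by simp
  show ?thesis
  proof (cases "cmod (d m) \<le> 1")
    case True
    have "(cmod (tau m))^2 * (rnorm \<alpha> m)^2 = (cmod (?G + - (g m * d m)))^2"
      by (simp add: G norm_mult power_mult_distrib)
    also have "\<dots> \<le> 2 * (cmod ?G)^2 + 2 * (cmod (- (g m * d m)))^2" by (rule sq_bound2)
    also have "(cmod (- (g m * d m)))^2 \<le> (cmod (g m))^2"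
    proof -
      have "(cmod (- (g m * d m)))^2 = (cmod (g m))^2 * (cmod (d m))^2" by (simp add: norm_mult power_mult_distrib)
      also have "\<dots> \<le> (cmod (g m))^2 * 1"
        by (rule mult_left_mono) (use True in \<open>auto simp: power_le_one\<close>)
      finally show ?thesis by simp
    qed
    finally have "(cmod (tau m))^2 * (rnorm \<alpha> m)^2 \<le> 2 * ((cmod ?G)^2 + (cmod (g m))^2)" by simp
    then show ?thesis by (intro exI[of _ 0]) (simp add: W0)
  next
    case False
    then have dnz: "d m \<noteq> 0" by auto
    let ?l = "tau m / d m"
    have "(cmod ?l)^2 * (rnorm \<alpha> m)^2 = (cmod (?G / d m + - g m))^2"
      using dnz by (simp add: G norm_mult norm_divide power_mult_distrib power_divide field_simps)
    also have "\<dots> \<le> 2 * (cmod (?G / d m))^2 + 2 * (cmod (- g m))^2" by (rule sq_bound2)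
    also have "(cmod (?G / d m))^2 \<le> (cmod ?G)^2"
    proof -
      have "cmod ?G / cmod (d m) \<le> cmod ?G / 1"
        by (rule divide_left_mono) (use False in auto)
      then have "cmod (?G / d m) \<le> cmod ?G" by (simp add: norm_divide)
      then show ?thesis by (simp add: power_mono)
    qed
    finally have "(cmod ?l)^2 * (rnorm \<alpha> m)^2 \<le> 2 * ((cmod ?G)^2 + (cmod (g m))^2)" by simp
    moreover have "?l * d m - tau m = 0" using dnz by simp
    ultimately show ?thesis using W0 by (intro exI[of _ ?l]) simp
  qed
qed

lemma sqrt_less_sq: "0 < e \<Longrightarrow> S < e^2 \<Longrightarrow> sqrt S < e"
  using real_sqrt_less_mono[of S "e^2"] by simp

lemma approx:
  assumes lG: "l2 (Aop d (rnorm \<alpha>) g)" and e: "e > 0"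
  shows "\<exists>c. (\<exists>N. \<forall>k>N. c k = 0) \<and> l2norm (c - g) < e \<and>
             l2norm (Aop d (rnorm \<alpha>) c - Aop d (rnorm \<alpha>) g) < e"
proof -
  let ?A = "Aop d (rnorm \<alpha>)"
  let ?r = "rnorm \<alpha>"
  define K where "K = 1 + 1 / (\<alpha> + 1)"
  have K: "K > 0" using \<alpha> by (simp add: K_def add_pos_pos)
  define W where "W m = (cmod (?A g m))^2 + (cmod (g m))^2" for m
  have W: "summable W" "\<And>m. W m \<ge> 0" using lG g unfolding W_def l2_def by (auto intro: summable_add)
  have e2: "e^2 / 2 > 0" using e by simp
  obtain N1 where N1: "\<forall>m\<ge>N1. (\<Sum>j. (cmod (g (j + Suc m)))^2) < e^2 / 2"
    using tail_small[OF g e2] by blast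
  obtain N2 where N2: "\<forall>m\<ge>N2. (\<Sum>j. (cmod (?A g (j + Suc m)))^2) < e^2 / 2"
    using tail_small[OF lG e2] by blast
  have e4: "e^2 / (4 * K) > 0" using e K by simp
  obtain m where m: "m \<ge> max N1 N2" "W m * (real m + 1) < e^2 / (4 * K)"
    using liminf_lemma[OF W e4] by blast
  have RB: "(\<Sum>s\<le>m. (?r s)^2) \<le> (?r m)^2 * (K * (real m + 1))"
  proof -
    have "(real m + \<alpha> + 1) / (\<alpha> + 1) = 1 + real m / (\<alpha> + 1)" using \<alpha> by (simp add: field_simps)
    also have "real m / (\<alpha> + 1) \<le> (real m + 1) / (\<alpha> + 1)" using \<alpha> by (intro divide_right_mono) auto
    then have "1 + real m / (\<alpha> + 1) \<le> K * (real m + 1)" by (simp add: K_def field_simps)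
    finally have "(real m + \<alpha> + 1) / (\<alpha> + 1) \<le> K * (real m + 1)" .
    then have "(?r m)^2 * ((real m + \<alpha> + 1) / (\<alpha> + 1)) \<le> (?r m)^2 * (K * (real m + 1))"
      by (rule mult_left_mono) simp
    then show ?thesis using Rsum[OF \<alpha>, of m] by simp
  qed
  obtain lam where B1: "(cmod lam)^2 * (?r m)^2 \<le> 2 * W m"
    and B2: "(cmod (lam * d m - tau m))^2 * (?r m)^2 \<le> 2 * W m"
    using lam_choice[OF lG, of m] unfolding W_def by blast
  have bnd: "(cmod mu)^2 * (\<Sum>s\<le>m. (?r s)^2) < e^2 / 2" if mu: "(cmod mu)^2 * (?r m)^2 \<le> 2 * W m" for mu
  proof -
    have "(cmod mu)^2 * (\<Sum>s\<le>m. (?r s)^2) \<le> (cmod mu)^2 * ((?r m)^2 * (K * (real m + 1)))"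
      by (rule mult_left_mono[OF RB]) simp
    also have "\<dots> = ((cmod mu)^2 * (?r m)^2) * (K * (real m + 1))" by simp
    also have "\<dots> \<le> (2 * W m) * (K * (real m + 1))"
      by (rule mult_right_mono[OF mu]) (use K in simp)
    also have "\<dots> = 2 * K * (W m * (real m + 1))" by simp
    also have "\<dots> < 2 * K * (e^2 / (4 * K))"
      by (rule mult_strict_left_mono[OF m(2)]) (use K in simp)
    also have "\<dots> = e^2 / 2" using K by simp
    finally show ?thesis .
  qed
  define c where "c = (\<lambda>s. if s \<le> m then g s + lam * complex_of_real (?r s) else 0)"
  have cf: "\<forall>k>m. c k = 0" by (simp add: c_def)
  have d1: "c - g = (\<lambda>s. if s \<le> m then complex_of_real (?r s) * lam else - g s)"
    by (auto simp: c_def fun_eq_iff)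
  have d2: "?A c - ?A g = (\<lambda>s. if s \<le> m then complex_of_real (?r s) * (lam * d m - tau m) else - ?A g s)"
    unfolding c_def by (auto simp: fun_eq_iff Aop_approx algebra_simps)
  have n1: "(\<Sum>s. (cmod ((c - g) s))^2) < e^2"
  proof -
    have "(\<Sum>s. (cmod ((c - g) s))^2) = (cmod lam)^2 * (\<Sum>s\<le>m. (?r s)^2) + (\<Sum>j. (cmod (- g (j + Suc m)))^2)"
      unfolding d1 by (rule norm_split[OF l2_minus[OF g]])
    also have "\<dots> < e^2 / 2 + e^2 / 2"
      using bnd[OF B1] N1 m(1) by (intro add_strict_mono) auto
    finally show ?thesis by simp
  qed
  have n2: "(\<Sum>s. (cmod ((?A c - ?A g) s))^2) < e^2"
  proof -
    have "(\<Sum>s. (cmod ((?A c - ?A g) s))^2) = (cmod (lam * d m - tau m))^2 * (\<Sum>s\<le>m. (?r s)^2) + (\<Sum>j. (cmod (- ?A g (j + Suc m)))^2)"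
      unfolding d2 by (rule norm_split[OF l2_minus[OF lG]])
    also have "\<dots> < e^2 / 2 + e^2 / 2"
      using bnd[OF B2] N2 m(1) by (intro add_strict_mono) auto
    finally show ?thesis by simp
  qed
  show ?thesis
  proof (intro exI conjI)
    show "\<forall>k>m. c k = 0" by (rule cf)
    show "l2norm (c - g) < e" unfolding l2norm_def by (rule sqrt_less_sq[OF e n1])
    show "l2norm (?A c - ?A g) < e" unfolding l2norm_def by (rule sqrt_less_sq[OF e n2])
  qed
qed

lemma l2norm_nonneg: "l2 x \<Longrightarrow> l2norm x \<ge> 0"
  unfolding l2norm_def using l2_suminf_nonneg by simp

lemma closure_complete:
  assumes lG: "l2 (Aop d (rnorm \<alpha>) g)"
  shows "(g, Aop d (rnorm \<alpha>) g) \<in> graph_closure (Gfin d (rnorm \<alpha>))"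
proof -
  let ?A = "Aop d (rnorm \<alpha>)"
  have "\<forall>m. \<exists>c. (\<exists>N. \<forall>k>N. c k = 0) \<and> l2norm (c - g) < inverse (real (Suc m)) \<and>
             l2norm (?A c - ?A g) < inverse (real (Suc m))"
    using approx[OF lG] by simp
  from choice[OF this] obtain C where C: "\<And>m. (\<exists>N. \<forall>k>N. C m k = 0) \<and> l2norm (C m - g) < inverse (real (Suc m)) \<and>
             l2norm (?A (C m) - ?A g) < inverse (real (Suc m))" by blast
  have l2C: "l2 (C m)" for m using C[of m] l2_fin by blast
  have l2AC: "l2 (?A (C m))" for m
  proof -
    obtain N where N: "\<forall>k>N. C m k = 0" using C[of m] by blast
    have "\<forall>k>N. ?A (C m) k = 0" by (auto simp: Aop_fin[OF N])
    then show ?thesis by (rule l2_fin)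
  qed
  define F where "F m = (C m, ?A (C m))" for m
  have FG: "\<forall>m. F m \<in> Gfin d (rnorm \<alpha>)" using C unfolding F_def Gfin_mem by auto
  have lim1: "(\<lambda>m. l2norm (fst (F m) - g)) \<longlonglongrightarrow> 0"
  proof (rule Lim_null_comparison[OF _ LIMSEQ_inverse_real_of_nat])
    show "\<forall>\<^sub>F m in sequentially. norm (l2norm (fst (F m) - g)) \<le> inverse (real (Suc m))"
    proof (intro always_eventually allI)
      fix m
      have "l2norm (C m - g) \<ge> 0" by (rule l2norm_nonneg[OF l2_diff'[OF l2C g]])
      then show "norm (l2norm (fst (F m) - g)) \<le> inverse (real (Suc m))"
        using C[of m] by (simp add: F_def)
    qed
  qed
  have lim2: "(\<lambda>m. l2norm (snd (F m) - ?A g)) \<longlonglongrightarrow> 0"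
  proof (rule Lim_null_comparison[OF _ LIMSEQ_inverse_real_of_nat])
    show "\<forall>\<^sub>F m in sequentially. norm (l2norm (snd (F m) - ?A g)) \<le> inverse (real (Suc m))"
    proof (intro always_eventually allI)
      fix m
      have "l2norm (?A (C m) - ?A g) \<ge> 0" by (rule l2norm_nonneg[OF l2_diff'[OF l2AC lG]])
      then show "norm (l2norm (snd (F m) - ?A g)) \<le> inverse (real (Suc m))"
        using C[of m] by (simp add: F_def)
    qed
  qed
  show ?thesis
    unfolding graph_closure_def mem_Collect_eq case_prod_conv
    using g lG FG lim1 lim2 by blast
qed

end


lemma closure_results:
  assumes \<alpha>: "\<alpha> > -1"
    and la: "l2 (\<lambda>k. (cnj (d k) - cnj (dmf d k)) / complex_of_real (rnorm \<alpha> k))"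
  shows "closable (Gfin d (rnorm \<alpha>))"
    and "l2 g \<Longrightarrow> g \<in> cl_dom (Gfin d (rnorm \<alpha>)) \<longleftrightarrow> l2 (Aop d (rnorm \<alpha>) g)"
    and "g \<in> cl_dom (Gfin d (rnorm \<alpha>)) \<Longrightarrow> cl_op (Gfin d (rnorm \<alpha>)) g = Aop d (rnorm \<alpha>) g"
proof -
  have lv: "\<And>n. l2 (Bop d (rnorm \<alpha>) (del n))"
    using l2_Bop_del la rnorm_pos[OF \<alpha>] by (metis less_irrefl)
  show "closable (Gfin d (rnorm \<alpha>))"
    unfolding closable_def using closure_unique[OF lv] by blast
  show "l2 g \<Longrightarrow> g \<in> cl_dom (Gfin d (rnorm \<alpha>)) \<longleftrightarrow> l2 (Aop d (rnorm \<alpha>) g)"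
  proof
    assume "g \<in> cl_dom (Gfin d (rnorm \<alpha>))"
    then obtain h where gh: "(g, h) \<in> graph_closure (Gfin d (rnorm \<alpha>))" unfolding cl_dom_def by blast
    then have "l2 h" unfolding graph_closure_def by blast
    then show "l2 (Aop d (rnorm \<alpha>) g)" using closure_unique[OF lv gh] by simp
  next
    assume "l2 g" "l2 (Aop d (rnorm \<alpha>) g)"
    then show "g \<in> cl_dom (Gfin d (rnorm \<alpha>))"
      unfolding cl_dom_def using closure_complete[OF \<alpha> la] by blast
  qed
  show "g \<in> cl_dom (Gfin d (rnorm \<alpha>)) \<Longrightarrow> cl_op (Gfin d (rnorm \<alpha>)) g = Aop d (rnorm \<alpha>) g"
  proof -
    assume "g \<in> cl_dom (Gfin d (rnorm \<alpha>))"
    then obtain h where gh: "(g, h) \<in> graph_closure (Gfin d (rnorm \<alpha>))" unfolding cl_dom_def by blast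
    have "h = Aop d (rnorm \<alpha>) g" by (rule closure_unique[OF lv gh])
    then show ?thesis unfolding cl_op_def using gh closure_unique[OF lv]
      by (intro the_equality) auto
  qed
qed

lemma coeff_mop: "coeff (mop \<alpha> p) i =
   2 * of_nat i * of_nat (Suc i) * coeff p (Suc i) + 2 * complex_of_real (\<alpha> + 2) * of_nat (Suc i) * coeff p (Suc i)
   - 2 * of_nat i * coeff p i + coeff p i"
  by (cases i) (simp_all add: mop_def coeff_pderiv algebra_simps)

lemma mop_add: "mop \<alpha> (p + q) = mop \<alpha> p + mop \<alpha> q"
  by (rule poly_eqI) (simp add: coeff_mop algebra_simps)

lemma mop_smult: "mop \<alpha> (smult a p) = smult a (mop \<alpha> p)"
  by (rule poly_eqI) (simp add: coeff_mop algebra_simps)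

lemma mop_sum: "mop \<alpha> (\<Sum>k\<in>A. f k) = (\<Sum>k\<in>A. mop \<alpha> (f k))"
proof -
  have z: "mop \<alpha> 0 = 0" by (rule poly_eqI) (simp add: coeff_mop)
  show ?thesis by (induction A rule: infinite_finite_induct) (simp_all add: mop_add z)
qed

definition lagc :: "real \<Rightarrow> nat \<Rightarrow> nat \<Rightarrow> real" where
  "lagc \<beta> n i = (if i \<le> n then (-1)^i / fact i * ((real n + \<beta>) gchoose (n - i)) else 0)"

lemma coeff_laguerre': "coeff (laguerre \<beta> n) i = complex_of_real (lagc \<beta> n i)"
  by (simp add: coeff_laguerre lagc_def)

lemma lag_rec: "(real i + 1) * (real i + \<beta> + 1) * lagc \<beta> n (Suc i) = (real i - real n) * lagc \<beta> n i"
proof (cases "i < n")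
  case False
  then show ?thesis by (cases "i = n") (auto simp: lagc_def)
next
  case True
  define t where "t = n - Suc i"
  have t1: "n - i = Suc t" and t2: "n - Suc i = t" using True by (auto simp: t_def)
  have tr: "real t = real n - real i - 1" using True by (simp add: t_def of_nat_diff)
  define a where "a = real n + \<beta>"
  have k1: "real (Suc t) * (a gchoose Suc t) = (a - real t) * (a gchoose t)"
    using gbinomial_mult_1[of a t] by (simp add: algebra_simps)
  have k2: "a - real t = real i + \<beta> + 1" using tr by (simp add: a_def)
  have key: "real (Suc t) * (a gchoose Suc t) = (real i + \<beta> + 1) * (a gchoose t)"
    using k1 k2 by simp
  have l1: "lagc \<beta> n (Suc i) = (-1)^(Suc i) / fact (Suc i) * (a gchoose t)"
    using True by (simp add: lagc_def t2 a_def)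
  have f: "(real i + 1) / fact (Suc i) = 1 / (fact i :: real)"
    by (simp add: fact_Suc del: of_nat_Suc) (simp add: divide_simps)
  have "(real i + 1) * (real i + \<beta> + 1) * lagc \<beta> n (Suc i)
      = ((real i + 1) / fact (Suc i)) * (-1)^(Suc i) * ((real i + \<beta> + 1) * (a gchoose t))"
    by (simp add: l1 divide_inverse mult_ac)
  also have "\<dots> = - ((-1)^i / fact i) * ((real i + \<beta> + 1) * (a gchoose t))"
    by (simp only: f) simp
  also have "\<dots> = - ((-1)^i / fact i) * (real (Suc t) * (a gchoose Suc t))" by (simp only: key)
  also have "\<dots> = (real i - real n) * lagc \<beta> n i"
  proof -
    have "real i - real n = - real (Suc t)" using tr by simp
    then show ?thesis using True by (simp add: lagc_def t1 a_def) (simp add: divide_simps algebra_simps)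
  qed
  finally show ?thesis .
qed

lemma mop_lag: "mop \<alpha> (laguerre (\<alpha> + 1) n) = smult (- 2 * of_nat n + 1) (laguerre (\<alpha> + 1) n)"
proof (rule poly_eqI)
  fix i
  let ?l0 = "lagc (\<alpha> + 1) n i" and ?l1 = "lagc (\<alpha> + 1) n (Suc i)"
  have R: "2 * real i * real (Suc i) * ?l1 + 2 * (\<alpha> + 2) * real (Suc i) * ?l1 - 2 * real i * ?l0 + ?l0
      = (- 2 * real n + 1) * ?l0"
  proof -
    have "(real i + 1) * (real i + (\<alpha> + 1) + 1) * ?l1 = (real i - real n) * ?l0" by (rule lag_rec)
    then show ?thesis by (simp add: algebra_simps)
  qed
  have "coeff (mop \<alpha> (laguerre (\<alpha> + 1) n)) i =
     complex_of_real (2 * real i * real (Suc i) * ?l1 + 2 * (\<alpha> + 2) * real (Suc i) * ?l1 - 2 * real i * ?l0 + ?l0)"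
    by (simp add: coeff_mop coeff_laguerre')
  also have "\<dots> = complex_of_real ((- 2 * real n + 1) * ?l0)" by (simp only: R)
  also have "\<dots> = coeff (smult (- 2 * of_nat n + 1) (laguerre (\<alpha> + 1) n)) i"
    by (simp add: coeff_laguerre')
  finally show "coeff (mop \<alpha> (laguerre (\<alpha> + 1) n)) i = coeff (smult (- 2 * of_nat n + 1) (laguerre (\<alpha> + 1) n)) i" .
qed

lemma mop_Emap: "mop \<alpha> f = Emap (laguerre (\<alpha> + 1)) (\<lambda>s. - 2 * of_nat s + 1) f"
proof -
  let ?P = "laguerre (\<alpha> + 1)"
  let ?c = "coords ?P f"
  have f: "f = (\<Sum>k\<le>degree f. smult (?c k) (?P k))" using lag.coords_spec[where p=f and \<beta>="\<alpha> + 1"] by simp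
  have "mop \<alpha> f = mop \<alpha> (\<Sum>k\<le>degree f. smult (?c k) (?P k))" using f by (rule arg_cong)
  also have "\<dots> = (\<Sum>k\<le>degree f. smult ((- 2 * of_nat k + 1) * ?c k) (?P k))"
    by (simp add: mop_sum mop_smult mop_lag mult.commute)
  also have "\<dots> = Emap ?P (\<lambda>s. - 2 * of_nat s + 1) f" by (simp add: Emap_def)
  finally show ?thesis .
qed

lemma inv_r_summable:
  assumes a: "\<alpha> > 1"
  shows "summable (\<lambda>k. 1 / (rnorm \<alpha> k)^2)"
proof -
  have a1: "\<alpha> > -1" using a by simp
  define x where "x k = 1 / (rnorm \<alpha> k)^2" for k
  have xpos: "x k \<ge> 0" for k by (simp add: x_def)
  have xs: "x (Suc k) * (real k + \<alpha> + 1) = x k * (real k + 1)" for k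
  proof -
    have rp: "(rnorm \<alpha> k)^2 > 0" using rnorm_pos[OF a1, of k] by simp
    have kp: "real k + \<alpha> + 1 > 0" using a by simp
    have "x (Suc k) = (real k + 1) / ((rnorm \<alpha> k)^2 * (real k + \<alpha> + 1))"
      by (simp add: x_def rnorm_sq_Suc[OF a1])
    also have "\<dots> = ((real k + 1) / (rnorm \<alpha> k)^2) / (real k + \<alpha> + 1)" by simp
    finally show ?thesis using kp by (simp add: x_def)
  qed
  have inv: "(\<alpha> - 1) * (\<Sum>k<N. x (Suc k)) + (real N + 1) * x N = 1" for N
  proof (induction N)
    case 0 then show ?case by (simp add: x_def rnorm_0[OF a1])
  next
    case (Suc N)
    have "(\<alpha> - 1) * (\<Sum>k<Suc N. x (Suc k)) + (real (Suc N) + 1) * x (Suc N)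
        = (\<alpha> - 1) * (\<Sum>k<N. x (Suc k)) + x (Suc N) * (real N + \<alpha> + 1)"
      by (simp add: algebra_simps)
    also have "\<dots> = (\<alpha> - 1) * (\<Sum>k<N. x (Suc k)) + (real N + 1) * x N" using xs[of N] by (simp add: algebra_simps)
    finally show ?case using Suc by simp
  qed
  have "summable (\<lambda>k. x (Suc k))"
  proof (rule summableI_nonneg_bounded)
    show "0 \<le> x (Suc k)" for k by (rule xpos)
    fix N
    have "(\<alpha> - 1) * (\<Sum>k<N. x (Suc k)) \<le> 1" using inv[of N] xpos[of N]
      by (smt (verit) mult_nonneg_nonneg of_nat_0_le_iff)
    then show "(\<Sum>k<N. x (Suc k)) \<le> 1 / (\<alpha> - 1)" using a by (simp add: field_simps)
  qed
  then have "summable x" by (simp only: summable_Suc_iff)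
  moreover have "x = (\<lambda>k. 1 / (rnorm \<alpha> k)^2)" by (rule ext) (simp add: x_def)
  ultimately show ?thesis by simp
qed


lemma qt_as_sum: "qt \<alpha> s = (\<Sum>k\<le>s. smult (del s k) (qt \<alpha> k))"
proof -
  have "(\<Sum>k\<le>s. smult (del s k) (qt \<alpha> k)) = (\<Sum>k\<le>s. if k = s then qt \<alpha> k else 0)"
    by (rule sum.cong) (auto simp: del_def)
  also have "\<dots> = qt \<alpha> s" by simp
  finally show ?thesis by simp
qed

lemma l2_d5:
  assumes a: "\<alpha> > 1"
  shows "l2 (\<lambda>k. (cnj (- 2 * of_nat k + 1) - cnj (dmf (\<lambda>s. - 2 * of_nat s + 1) k)) / complex_of_real (rnorm \<alpha> k))"
  unfolding l2_def
proof (rule summable_comparison_test[OF _ summable_mult[OF inv_r_summable[OF a], of 4]], intro exI allI impI)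
  fix k :: nat
  have b: "(cmod (cnj (- 2 * of_nat k + 1) - cnj (dmf (\<lambda>s. - 2 * of_nat s + 1) k)))^2 \<le> 4"
  proof (cases k)
    case 0 then show ?thesis by (simp add: dmf_def)
  next
    case (Suc j)
    have eq: "cnj (- 2 * of_nat k + 1) - cnj (dmf (\<lambda>s. - 2 * of_nat s + 1) k) = (-2 :: complex)"
      using Suc by (simp add: dmf_def algebra_simps)
    show ?thesis by (subst eq) simp
  qed
  show "norm ((cmod ((cnj (- 2 * of_nat k + 1) - cnj (dmf (\<lambda>s. - 2 * of_nat s + 1) k)) / complex_of_real (rnorm \<alpha> k)))^2)
        \<le> 4 * (1 / (rnorm \<alpha> k)^2)"
    using b by (simp add: norm_divide power_divide divide_right_mono)
qed

theorem theorem3: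
  fixes \<alpha> :: real and d :: "nat \<Rightarrow> complex"
  assumes "\<alpha> > -1" and "d \<in> Dtilde"
  defines "dm \<equiv> (\<lambda>k. if k = 0 then 0 else d (k - 1))"
      and "r \<equiv> rnorm \<alpha>"
      and "G \<equiv> op_graph \<alpha> (Emap (laguerre (\<alpha> + 1)) d)"
  shows
   "(\<forall>g. l2 g \<longrightarrow>
       (g \<in> adj_dom G \<longleftrightarrow>
        summable (\<lambda>k. (cmod (cnj (d k) * g k
           + (\<Sum>t<k. (cnj (d k) - cnj (dm k)) * r t * g t / r k)))^2)))
    \<and> (\<forall>g \<in> adj_dom G.
        adj G g = (\<lambda>k. cnj (d k) * g k
           + (\<Sum>t<k. (cnj (d k) - cnj (dm k)) * g t * r t / r k)))
    \<and> (\<forall>s. emb \<alpha> (qt \<alpha> s) \<in> adj_dom G \<longleftrightarrow>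
           l2 (\<lambda>k. (cnj (d k) - cnj (dm k)) / r k))
    \<and> (l2 (\<lambda>k. (cnj (d k) - cnj (dm k)) / r k) \<longrightarrow>
         closable G
       \<and> (\<forall>g. l2 g \<longrightarrow>
           (g \<in> cl_dom G \<longleftrightarrow>
            summable (\<lambda>s. (cmod (g s * d s
              + (\<Sum>j. (d (j + s + 1) - dm (j + s + 1)) * r s / r (j + s + 1) * g (j + s + 1))))^2)))
       \<and> (\<forall>g \<in> cl_dom G.
           cl_op G g = (\<lambda>s. g s * d s
              + (\<Sum>j. (d (j + s + 1) - dm (j + s + 1)) * r s / r (j + s + 1) * g (j + s + 1)))))
    \<and> (\<alpha> > 1 \<longrightarrow>
         (\<forall>g. l2 g \<longrightarrow>
           (g \<in> cl_dom (op_graph \<alpha> (mop \<alpha>)) \<longleftrightarrow>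
            summable (\<lambda>s. (cmod (g s * (- 2 * of_nat s + 1)
              + (\<Sum>j. (- 2) * r s / r (j + s + 1) * g (j + s + 1))))^2)))
       \<and> (\<forall>g \<in> cl_dom (op_graph \<alpha> (mop \<alpha>)).
           cl_op (op_graph \<alpha> (mop \<alpha>)) g = (\<lambda>s. g s * (- 2 * of_nat s + 1)
              + (\<Sum>j. (- 2) * r s / r (j + s + 1) * g (j + s + 1)))))"
proof -
  have a: "\<alpha> > -1" by (rule assms(1))
  have dm: "dm = dmf d" unfolding dm_def dmf_def by (rule ext) simp
  have G: "G = Gfin d r" unfolding G_def r_def op_graph_char[OF a] Gfin_def ..
  have P1: "\<forall>g. l2 g \<longrightarrow>
       (g \<in> adj_dom G \<longleftrightarrow>
        summable (\<lambda>k. (cmod (cnj (d k) * g k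
           + (\<Sum>t<k. (cnj (d k) - cnj (dm k)) * r t * g t / r k)))^2))"
    unfolding G dm using adj_dom_iff unfolding l2_def Bop_def by blast
  have P2: "\<forall>g \<in> adj_dom G.
        adj G g = (\<lambda>k. cnj (d k) * g k
           + (\<Sum>t<k. (cnj (d k) - cnj (dm k)) * g t * r t / r k))"
  proof
    fix g assume "g \<in> adj_dom G"
    then have "adj G g = Bop d r g" unfolding G by (rule adj_eq)
    then show "adj G g = (\<lambda>k. cnj (d k) * g k + (\<Sum>t<k. (cnj (d k) - cnj (dm k)) * g t * r t / r k))"
      by (simp add: Bop_def dm mult_ac)
  qed
  have P3: "\<forall>s. emb \<alpha> (qt \<alpha> s) \<in> adj_dom G \<longleftrightarrow>
           l2 (\<lambda>k. (cnj (d k) - cnj (dm k)) / r k)"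
  proof
    fix s
    have e: "emb \<alpha> (qt \<alpha> s) = del s"
      using emb_sum[OF a del_fin[of s]] qt_as_sum[of \<alpha> s] by simp
    have rs: "r s \<noteq> 0" using rnorm_pos[OF a, of s] by (simp add: r_def)
    show "emb \<alpha> (qt \<alpha> s) \<in> adj_dom G \<longleftrightarrow> l2 (\<lambda>k. (cnj (d k) - cnj (dm k)) / r k)"
      unfolding e G dm using adj_dom_iff[OF l2_fin[OF del_fin[of s]]] l2_Bop_del[where r=r and s=s, OF rs] by simp
  qed
  have P4: "l2 (\<lambda>k. (cnj (d k) - cnj (dm k)) / r k) \<longrightarrow>
         closable G
       \<and> (\<forall>g. l2 g \<longrightarrow>
           (g \<in> cl_dom G \<longleftrightarrow>
            summable (\<lambda>s. (cmod (g s * d s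
              + (\<Sum>j. (d (j + s + 1) - dm (j + s + 1)) * r s / r (j + s + 1) * g (j + s + 1))))^2)))
       \<and> (\<forall>g \<in> cl_dom G.
           cl_op G g = (\<lambda>s. g s * d s
              + (\<Sum>j. (d (j + s + 1) - dm (j + s + 1)) * r s / r (j + s + 1) * g (j + s + 1))))"
  proof
    assume la: "l2 (\<lambda>k. (cnj (d k) - cnj (dm k)) / r k)"
    then have la': "l2 (\<lambda>k. (cnj (d k) - cnj (dmf d k)) / complex_of_real (rnorm \<alpha> k))"
      by (simp add: dm r_def)
    note cr = closure_results[OF a la']
    show "closable G \<and> (\<forall>g. l2 g \<longrightarrow>
           (g \<in> cl_dom G \<longleftrightarrow>
            summable (\<lambda>s. (cmod (g s * d s
              + (\<Sum>j. (d (j + s + 1) - dm (j + s + 1)) * r s / r (j + s + 1) * g (j + s + 1))))^2)))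
       \<and> (\<forall>g \<in> cl_dom G.
           cl_op G g = (\<lambda>s. g s * d s
              + (\<Sum>j. (d (j + s + 1) - dm (j + s + 1)) * r s / r (j + s + 1) * g (j + s + 1))))"
    proof (intro conjI allI impI ballI)
      show "closable G" using cr(1) unfolding G r_def .
    next
      fix g :: "nat \<Rightarrow> complex" assume lg: "l2 g"
      show "g \<in> cl_dom G \<longleftrightarrow>
            summable (\<lambda>s. (cmod (g s * d s
              + (\<Sum>j. (d (j + s + 1) - dm (j + s + 1)) * r s / r (j + s + 1) * g (j + s + 1))))^2)"
        using cr(2)[OF lg] unfolding G dm r_def l2_def Aop_def .
    next
      fix g assume "g \<in> cl_dom G"
      then have "g \<in> cl_dom (Gfin d (rnorm \<alpha>))" unfolding G r_def .
      from cr(3)[OF this] show "cl_op G g = (\<lambda>s. g s * d s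
              + (\<Sum>j. (d (j + s + 1) - dm (j + s + 1)) * r s / r (j + s + 1) * g (j + s + 1)))"
        unfolding G dm r_def Aop_def .
    qed
  qed
  have P5: "\<alpha> > 1 \<longrightarrow>
         (\<forall>g :: nat \<Rightarrow> complex. l2 g \<longrightarrow>
           (g \<in> cl_dom (op_graph \<alpha> (mop \<alpha>)) \<longleftrightarrow>
            summable (\<lambda>s. (cmod (g s * (- 2 * of_nat s + 1)
              + (\<Sum>j. (- 2 :: complex) * complex_of_real (r s) / complex_of_real (r (j + s + 1)) * g (j + s + 1))))^2)))
       \<and> (\<forall>g \<in> cl_dom (op_graph \<alpha> (mop \<alpha>)).
           cl_op (op_graph \<alpha> (mop \<alpha>)) g = (\<lambda>s. g s * (- 2 * of_nat s + 1)
              + (\<Sum>j. (- 2 :: complex) * complex_of_real (r s) / complex_of_real (r (j + s + 1)) * g (j + s + 1))))"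
  proof
    assume a1: "\<alpha> > 1"
    define d5 :: "nat \<Rightarrow> complex" where "d5 = (\<lambda>s. - 2 * of_nat s + 1)"
    have M: "op_graph \<alpha> (mop \<alpha>) = Gfin d5 r"
    proof -
      have "mop \<alpha> = Emap (laguerre (\<alpha> + 1)) d5" unfolding d5_def by (rule ext) (rule mop_Emap)
      then show ?thesis unfolding r_def Gfin_def by (simp add: op_graph_char[OF a])
    qed
    have la: "l2 (\<lambda>k. (cnj (d5 k) - cnj (dmf d5 k)) / complex_of_real (rnorm \<alpha> k))"
      using l2_d5[OF a1] unfolding d5_def .
    note cr = closure_results[OF a la]
    have AE: "Aop d5 r g = (\<lambda>s. g s * (- 2 * of_nat s + 1)
              + (\<Sum>j. (- 2 :: complex) * complex_of_real (r s) / complex_of_real (r (j + s + 1)) * g (j + s + 1)))" for g :: "nat \<Rightarrow> complex"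
    proof (rule ext)
      fix s
      have dd: "d5 (j + s + 1) - dmf d5 (j + s + 1) = -2" for j
        by (simp add: d5_def dmf_def algebra_simps)
      have eq: "(\<Sum>j. (d5 (j + s + 1) - dmf d5 (j + s + 1)) * r s / r (j + s + 1) * g (j + s + 1))
           = (\<Sum>j. (- 2 :: complex) * complex_of_real (r s) / complex_of_real (r (j + s + 1)) * g (j + s + 1))"
        by (rule suminf_cong) (simp only: dd)
      show "Aop d5 r g s = (g s * (- 2 * of_nat s + 1)
              + (\<Sum>j. (- 2 :: complex) * complex_of_real (r s) / complex_of_real (r (j + s + 1)) * g (j + s + 1)))"
        unfolding Aop_def eq by (simp add: d5_def)
    qed
    show "(\<forall>g :: nat \<Rightarrow> complex. l2 g \<longrightarrow>
           (g \<in> cl_dom (op_graph \<alpha> (mop \<alpha>)) \<longleftrightarrow>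
            summable (\<lambda>s. (cmod (g s * (- 2 * of_nat s + 1)
              + (\<Sum>j. (- 2 :: complex) * complex_of_real (r s) / complex_of_real (r (j + s + 1)) * g (j + s + 1))))^2)))
       \<and> (\<forall>g \<in> cl_dom (op_graph \<alpha> (mop \<alpha>)).
           cl_op (op_graph \<alpha> (mop \<alpha>)) g = (\<lambda>s. g s * (- 2 * of_nat s + 1)
              + (\<Sum>j. (- 2 :: complex) * complex_of_real (r s) / complex_of_real (r (j + s + 1)) * g (j + s + 1))))"
    proof (intro conjI allI impI ballI)
      fix g :: "nat \<Rightarrow> complex" assume lg: "l2 g"
      have "g \<in> cl_dom (op_graph \<alpha> (mop \<alpha>)) \<longleftrightarrow> l2 (Aop d5 r g)"
        using cr(2)[OF lg] unfolding M r_def .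
      then show "g \<in> cl_dom (op_graph \<alpha> (mop \<alpha>)) \<longleftrightarrow>
            summable (\<lambda>s. (cmod (g s * (- 2 * of_nat s + 1)
              + (\<Sum>j. (- 2 :: complex) * complex_of_real (r s) / complex_of_real (r (j + s + 1)) * g (j + s + 1))))^2)"
        by (simp only: AE l2_def)
    next
      fix g assume "g \<in> cl_dom (op_graph \<alpha> (mop \<alpha>))"
      then have "g \<in> cl_dom (Gfin d5 (rnorm \<alpha>))" unfolding M r_def .
      from cr(3)[OF this] have "cl_op (op_graph \<alpha> (mop \<alpha>)) g = Aop d5 r g"
        unfolding M r_def .
      then show "cl_op (op_graph \<alpha> (mop \<alpha>)) g = (\<lambda>s. g s * (- 2 * of_nat s + 1)
              + (\<Sum>j. (- 2 :: complex) * complex_of_real (r s) / complex_of_real (r (j + s + 1)) * g (j + s + 1)))"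
        by (simp only: AE)
    qed
  qed
  show ?thesis by (rule conjI[OF P1 conjI[OF P2 conjI[OF P3 conjI[OF P4 P5]]]])
qed


end
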